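(* Let $\alpha,g_0,\kappa_0,b_0>0$ and $\lambda>2b_0$. For $\Delta\tau>0$ put $K=\frac{2\lambda\kappa_0}{\alpha g_0\Delta\tau}$ and $C=C(\Delta\tau)=\frac{\alpha g_0\Delta\tau}{2\lambda\kappa_0}$, and for real nonzero $b\neq b'$ define $$S_{+-}(b,b')=\frac{C^2}{b_0\pi}\int_{-\infty}^{\infty}e^{-i\lambda b''}\,\frac{\sin^2(b_0b'')}{b''^2}\,\frac{\sin[K(b-b'')]}{b-b''}\,\frac{\sin[K(b''-b')]}{b''-b'}\,db''.$$ Then $$S_{+-}(b,b')=\begin{cases}G_1(b,b'), & 0<\Delta\tau\le\frac{4\lambda\kappa_0}{\alpha g_0(\lambda+2b_0)},\\ G_2(b,b'), & \frac{4\lambda\kappa_0}{\alpha g_0(\lambda+2b_0)}\le\Delta\tau\le\frac{4\kappa_0}{\alpha g_0},\\ G_3(b,b'), & \frac{4\kappa_0}{\alpha g_0}\le\Delta\tau\le\frac{4\lambda\kappa_0}{\alpha g_0(\lambda-2b_0)},\\ 0, & \Delta\tau\ge\frac{4\lambda\kappa_0}{\alpha g_0(\lambda-2b_0)},\end{cases}$$ where $G_1=\frac{iC^2}{2b_0}\Big[\frac{e^{-i\lambda b'-iK(b-b')}}{b-b'}\frac{\sin^2(b_0b')}{b'^2}-\frac{e^{-i\lambda b+iK(b-b')}}{b-b'}\frac{\sin^2(b_0b)}{b^2}\Big]$, $G_2=\frac{C^2}{8b_0}\Big[\frac{f(b')e^{-iK(b-b')}}{b-b'}-\frac{f(b)e^{iK(b-b')}}{b-b'}-\frac{\phi_+(b,b')e^{-iK(b+b')}}{bb'}\Big]$,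 $G_3=\frac{C^2}{8b_0}\Big[\frac{h(b)e^{iK(b-b')}}{b-b'}-\frac{h(b')e^{-iK(b-b')}}{b-b'}+\frac{\phi_-(b,b')e^{-iK(b+b')}}{bb'}\Big]$, with $f(x)=i\,e^{-i\lambda x}[4\sin^2(b_0x)+e^{-2ib_0x}]/x^2$, $h(x)=i\,e^{-i(\lambda-2b_0)x}/x^2$, and $\phi_\pm(b,b')=\pm2b_0+\lambda+i\frac{b+b'}{bb'}-2K$. In particular the pointer states are exactly orthogonal ($S_{+-}\equiv0$) for $\Delta\tau\ge\frac{4\lambda\kappa_0}{\alpha g_0(\lambda-2b_0)}$.
   Context: This is the orthogonality function for the two pointer states in the measurement of $S_z$ of a spin-1/2 particle with probe initial state $\frac{1}{\sqrt{\kappa_0\pi}}\frac{\sin(\kappa_0 q)}{q}$ and pointer initial state $\frac{1}{\sqrt{b_0\pi}}\frac{\sin(b_0 b)}{b}$. *)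

theory Defs
  imports "HOL-Analysis.Analysis"
begin

definition Kc :: "real \<Rightarrow> real \<Rightarrow> real \<Rightarrow> real \<Rightarrow> real \<Rightarrow> real" where
  "Kc al g0 k0 lam dt = 2 * lam * k0 / (al * g0 * dt)"

definition Cc :: "real \<Rightarrow> real \<Rightarrow> real \<Rightarrow> real \<Rightarrow> real \<Rightarrow> real" where
  "Cc al g0 k0 lam dt = al * g0 * dt / (2 * lam * k0)"

definition Spm_integrand ::
  "real \<Rightarrow> real \<Rightarrow> real \<Rightarrow> real \<Rightarrow> real \<Rightarrow> real \<Rightarrow> real \<Rightarrow> real \<Rightarrow> real \<Rightarrow> complex" where
  "Spm_integrand al g0 k0 b0 lam dt b b' x =
     (let K = Kc al g0 k0 lam dt in
      exp (- \<i> * complex_of_real (lam * x)) *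
      complex_of_real ((sin (b0 * x))\<^sup>2 / x\<^sup>2 * (sin (K * (b - x)) / (b - x))
                        * (sin (K * (x - b')) / (x - b'))))"

definition Spm ::
  "real \<Rightarrow> real \<Rightarrow> real \<Rightarrow> real \<Rightarrow> real \<Rightarrow> real \<Rightarrow> real \<Rightarrow> real \<Rightarrow> complex" where
  "Spm al g0 k0 b0 lam dt b b' =
     complex_of_real ((Cc al g0 k0 lam dt)\<^sup>2 / (b0 * pi)) *
     (LINT x|lborel. Spm_integrand al g0 k0 b0 lam dt b b' x)"

definition f_aux :: "real \<Rightarrow> real \<Rightarrow> real \<Rightarrow> complex" where
  "f_aux b0 lam x = \<i> * exp (- \<i> * complex_of_real (lam * x)) *
     (complex_of_real (4 * (sin (b0 * x))\<^sup>2) + exp (- 2 * \<i> * complex_of_real (b0 * x)))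
     / complex_of_real (x\<^sup>2)"

definition h_aux :: "real \<Rightarrow> real \<Rightarrow> real \<Rightarrow> complex" where
  "h_aux b0 lam x = \<i> * exp (- \<i> * complex_of_real ((lam - 2 * b0) * x)) / complex_of_real (x\<^sup>2)"

text \<open>phi_plus (s = 1) and phi_minus (s = -1): s*2*b0 + lam + i (b+b')/(b b') - 2K.\<close>
definition phi_aux :: "real \<Rightarrow> real \<Rightarrow> real \<Rightarrow> real \<Rightarrow> real \<Rightarrow> real \<Rightarrow> complex" where
  "phi_aux s b0 lam K b b' = complex_of_real (s * 2 * b0 + lam)
     + \<i> * complex_of_real ((b + b') / (b * b')) - complex_of_real (2 * K)"

definition G1 :: "real \<Rightarrow> real \<Rightarrow> real \<Rightarrow> real \<Rightarrow> real \<Rightarrow> real \<Rightarrow> real \<Rightarrow> real \<Rightarrow> complex" where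
  "G1 al g0 k0 b0 lam dt b b' =
    (let K = Kc al g0 k0 lam dt; C = Cc al g0 k0 lam dt in
     \<i> * complex_of_real (C\<^sup>2 / (2 * b0)) *
     (exp (- \<i> * complex_of_real (lam * b') - \<i> * complex_of_real (K * (b - b')))
        / complex_of_real (b - b') * complex_of_real ((sin (b0 * b'))\<^sup>2 / b'\<^sup>2)
      - exp (- \<i> * complex_of_real (lam * b) + \<i> * complex_of_real (K * (b - b')))
        / complex_of_real (b - b') * complex_of_real ((sin (b0 * b))\<^sup>2 / b\<^sup>2)))"

definition G2 :: "real \<Rightarrow> real \<Rightarrow> real \<Rightarrow> real \<Rightarrow> real \<Rightarrow> real \<Rightarrow> real \<Rightarrow> real \<Rightarrow> complex" where
  "G2 al g0 k0 b0 lam dt b b' =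
    (let K = Kc al g0 k0 lam dt; C = Cc al g0 k0 lam dt in
     complex_of_real (C\<^sup>2 / (8 * b0)) *
     (f_aux b0 lam b' * exp (- \<i> * complex_of_real (K * (b - b'))) / complex_of_real (b - b')
      - f_aux b0 lam b * exp (\<i> * complex_of_real (K * (b - b'))) / complex_of_real (b - b')
      - phi_aux 1 b0 lam K b b' * exp (- \<i> * complex_of_real (K * (b + b')))
          / complex_of_real (b * b')))"

definition G3 :: "real \<Rightarrow> real \<Rightarrow> real \<Rightarrow> real \<Rightarrow> real \<Rightarrow> real \<Rightarrow> real \<Rightarrow> real \<Rightarrow> complex" where
  "G3 al g0 k0 b0 lam dt b b' =
    (let K = Kc al g0 k0 lam dt; C = Cc al g0 k0 lam dt in
     complex_of_real (C\<^sup>2 / (8 * b0)) *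
     (h_aux b0 lam b * exp (\<i> * complex_of_real (K * (b - b'))) / complex_of_real (b - b')
      - h_aux b0 lam b' * exp (- \<i> * complex_of_real (K * (b - b'))) / complex_of_real (b - b')
      + phi_aux (-1) b0 lam K b b' * exp (- \<i> * complex_of_real (K * (b + b')))
          / complex_of_real (b * b')))"

end

theory Submission
  imports Defs "HOL-Complex_Analysis.Complex_Analysis" "HOL-Probability.Sinc_Integral"
begin

definition snc :: "real \<Rightarrow> real \<Rightarrow> complex \<Rightarrow> complex" where
  "snc c a z = (if z = of_real a then of_real c else sin (of_real c * (z - of_real a)) / (z - of_real a))"

lemma snc_tendsto: "((\<lambda>z::complex. sin (of_real c * (z - of_real a)) / (z - of_real a)) \<longlongrightarrow> of_real c) (at (of_real a))"
proof -
  have "((\<lambda>z. sin (of_real c * (z - of_real a))) has_field_derivative (of_real c * cos (of_real c * (of_real a - of_real a)))) (at (of_real a))"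
    by (auto intro!: derivative_eq_intros)
  then have "((\<lambda>z. sin (of_real c * (z - of_real a))) has_field_derivative of_real c) (at (of_real a))" by simp
  then show ?thesis unfolding has_field_derivative_iff by simp
qed

lemma snc_holo: "snc c a holomorphic_on UNIV"
proof (rule no_isolated_singularity'[where K="{of_real a}"])
  show "snc c a holomorphic_on UNIV - {of_real a}"
  proof (rule holomorphic_transform[where f="\<lambda>z. sin (of_real c * (z - of_real a)) / (z - of_real a)"])
    show "(\<lambda>z. sin (of_real c * (z - of_real a)) / (z - of_real a)) holomorphic_on UNIV - {of_real a}"
      by (auto intro!: holomorphic_intros)
  qed (auto simp: snc_def)
next
  fix z assume "z \<in> {complex_of_real a}"
  then have z: "z = of_real a" by simp
  have "(snc c a \<longlongrightarrow> of_real c) (at (of_real a))"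
    by (rule Lim_transform_eventually[OF snc_tendsto]) (auto simp: eventually_at_filter snc_def)
  then show "(snc c a \<longlongrightarrow> snc c a z) (at z within UNIV)" using z by (simp add: snc_def)
qed auto

lemma snc_cont: "continuous_on S (snc c a)"
  using snc_holo holomorphic_on_imp_continuous_on holomorphic_on_subset by blast

lemma snc_of_real: "x \<noteq> a \<Longrightarrow> snc c a (of_real x) = of_real (sin (c * (x - a)) / (x - a))"
proof -
  assume "x \<noteq> a"
  have "snc c a (of_real x) = sin (of_real (c*(x-a))) / of_real (x-a)" using \<open>x \<noteq> a\<close> by (simp add: snc_def)
  then show ?thesis by (simp only: sin_of_real of_real_divide)
qed

definition Qf :: "real \<Rightarrow> real \<Rightarrow> complex \<Rightarrow> complex" where
  "Qf b b' z = 1 / (z^2 * (z - of_real b) * (z - of_real b'))"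
definition gnu :: "real \<Rightarrow> real \<Rightarrow> real \<Rightarrow> complex \<Rightarrow> complex" where
  "gnu b b' nu z = exp (\<i> * of_real nu * z) * Qf b b' z"
definition Fe :: "real \<Rightarrow> real \<Rightarrow> real \<Rightarrow> real \<Rightarrow> real \<Rightarrow> complex \<Rightarrow> complex" where
  "Fe b0 lam K b b' z = exp (- \<i> * of_real lam * z) * snc b0 0 z ^ 2 * snc K b z * snc K b' z"

definition cpp :: "real \<Rightarrow> real \<Rightarrow> real \<Rightarrow> complex" where
  "cpp K b b' = - exp (- \<i> * of_real (K * (b + b'))) / 4"
definition cpm :: "real \<Rightarrow> real \<Rightarrow> real \<Rightarrow> complex" where
  "cpm K b b' = - exp (\<i> * of_real (K * (b + b'))) / 4"
definition cp0 :: "real \<Rightarrow> real \<Rightarrow> real \<Rightarrow> complex" where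
  "cp0 K b b' = of_real (cos (K * (b - b'))) / 2"

lemma Fe_holo: "Fe b0 lam K b b' holomorphic_on UNIV"
  unfolding Fe_def using snc_holo
  by (intro holomorphic_intros) (auto intro: holomorphic_on_subset)

lemma Fe_cont: "continuous_on S (Fe b0 lam K b b')"
  using Fe_holo holomorphic_on_imp_continuous_on holomorphic_on_subset by blast

lemma E_expand:
  fixes z :: complex
  shows "exp (- \<i> * of_real lam * z) * sin (of_real b0 * z) ^ 2 * sin (of_real K * (z - of_real b))
           * sin (of_real K * (z - of_real b')) =
      (-1/4) * cpp K b b' * exp (\<i> * of_real (2*b0+2*K-lam) * z)
    + (1/2) * cpp K b b' * exp (\<i> * of_real (2*K-lam) * z)
    + (-1/4) * cpp K b b' * exp (\<i> * of_real (-2*b0+2*K-lam) * z)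
    + (-1/4) * cp0 K b b' * exp (\<i> * of_real (2*b0-lam) * z)
    + (1/2) * cp0 K b b' * exp (\<i> * of_real (-lam) * z)
    + (-1/4) * cp0 K b b' * exp (\<i> * of_real (-2*b0-lam) * z)
    + (-1/4) * cpm K b b' * exp (\<i> * of_real (2*b0-2*K-lam) * z)
    + (1/2) * cpm K b b' * exp (\<i> * of_real (-2*K-lam) * z)
    + (-1/4) * cpm K b b' * exp (\<i> * of_real (-2*b0-2*K-lam) * z)" (is "_ = ?rhs")
proof -
  define X where "X = exp (\<i> * of_real b0 * z)"
  define Y where "Y = exp (\<i> * of_real K * z)"
  define U where "U = exp (\<i> * of_real (K*b))"
  define V where "V = exp (\<i> * of_real (K*b'))"
  define L where "L = exp (\<i> * of_real lam * z)"
  have nz: "X \<noteq> 0" "Y \<noteq> 0" "U \<noteq> 0" "V \<noteq> 0" "L \<noteq> 0" by (auto simp: X_def Y_def U_def V_def L_def)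
  have s1: "sin (of_real b0 * z) = (X - 1/X) / (2*\<i>)"
    by (simp add: sin_exp_eq X_def exp_minus field_simps)
  have s2: "sin (of_real K * (z - of_real b)) = (Y/U - U/Y) / (2*\<i>)"
    by ((simp add: sin_exp_eq Y_def U_def exp_minus algebra_simps flip: exp_diff); (simp add: algebra_simps)?)
  have s3: "sin (of_real K * (z - of_real b')) = (Y/V - V/Y) / (2*\<i>)"
    by ((simp add: sin_exp_eq Y_def V_def exp_minus algebra_simps flip: exp_diff); (simp add: algebra_simps)?)
  have l: "exp (- \<i> * of_real lam * z) = 1/L" by (simp add: L_def exp_minus field_simps)
  have e1: "exp (\<i> * of_real (2*b0+2*K-lam) * z) = X^2*Y^2/L"
    unfolding X_def Y_def L_def by ((simp add: power2_eq_square exp_add[symmetric] exp_diff[symmetric]); (simp add: algebra_simps)?)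
  have e2: "exp (\<i> * of_real (2*K-lam) * z) = Y^2/L"
    unfolding X_def Y_def L_def by ((simp add: power2_eq_square exp_add[symmetric] exp_diff[symmetric]); (simp add: algebra_simps)?)
  have e3: "exp (\<i> * of_real (-2*b0+2*K-lam) * z) = Y^2/(L*X^2)"
    unfolding X_def Y_def L_def by ((simp add: power2_eq_square exp_add[symmetric] exp_diff[symmetric]); (simp add: algebra_simps)?)
  have e4: "exp (\<i> * of_real (2*b0-lam) * z) = X^2/L"
    unfolding X_def Y_def L_def by ((simp add: power2_eq_square exp_add[symmetric] exp_diff[symmetric]); (simp add: algebra_simps)?)
  have e5: "exp (\<i> * of_real (-lam) * z) = 1/L"
    unfolding X_def Y_def L_def by (simp add: exp_minus field_simps)
  have e6: "exp (\<i> * of_real (-2*b0-lam) * z) = 1/(L*X^2)"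
    unfolding X_def Y_def L_def by ((simp add: power2_eq_square exp_add[symmetric] exp_diff[symmetric] exp_minus field_simps); (simp add: algebra_simps)?)
  have e7: "exp (\<i> * of_real (2*b0-2*K-lam) * z) = X^2/(L*Y^2)"
    unfolding X_def Y_def L_def by ((simp add: power2_eq_square exp_add[symmetric] exp_diff[symmetric]); (simp add: algebra_simps)?)
  have e8: "exp (\<i> * of_real (-2*K-lam) * z) = 1/(L*Y^2)"
    unfolding X_def Y_def L_def by ((simp add: power2_eq_square exp_add[symmetric] exp_diff[symmetric] exp_minus field_simps); (simp add: algebra_simps)?)
  have e9: "exp (\<i> * of_real (-2*b0-2*K-lam) * z) = 1/(L*X^2*Y^2)"
    unfolding X_def Y_def L_def by ((simp add: power2_eq_square exp_add[symmetric] exp_diff[symmetric] exp_minus field_simps); (simp add: algebra_simps)?)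
  have pp: "cpp K b b' = - 1/(4*U*V)"
    unfolding cpp_def U_def V_def by (simp add: exp_minus field_simps exp_add[symmetric] algebra_simps)
  have pm: "cpm K b b' = - U*V/4"
    unfolding cpm_def U_def V_def by (simp add: exp_add[symmetric] algebra_simps)
  have p0: "cp0 K b b' = (U/V + V/U)/4"
    unfolding cp0_def U_def V_def
    by ((simp add: cos_exp_eq flip: cos_of_real exp_diff); (simp add: field_simps exp_add[symmetric] exp_minus)?)
  have ss1: "sin (of_real b0 * z) ^ 2 = (2 - X^2 - 1/X^2)/4"
    unfolding s1 using nz by (simp add: field_simps power2_eq_square)
  have ss23: "sin (of_real K * (z - of_real b)) * sin (of_real K * (z - of_real b')) = (U/V + V/U)/4 - (Y^2/(U*V) + U*V/Y^2)/4"
    unfolding s2 s3 using nz by (simp add: field_simps power2_eq_square)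
  have "exp (- \<i> * of_real lam * z) * sin (of_real b0 * z) ^ 2 * sin (of_real K * (z - of_real b))
           * sin (of_real K * (z - of_real b')) = (1/L) * ((2 - X^2 - 1/X^2)/4) * ((U/V + V/U)/4 - (Y^2/(U*V) + U*V/Y^2)/4)"
    unfolding l ss1 by (simp only: mult.assoc ss23)
  also have "\<dots> = ?rhs"
    unfolding e1 e2 e3 e4 e5 e6 e7 e8 e9 pp pm p0
    using nz by (simp add: field_simps) algebra
  finally show ?thesis .
qed

lemma rect_split:
  assumes "continuous_on S f" "path_image (rectpath a1 a3) \<subseteq> S"
  shows "contour_integral (rectpath a1 a3) f =
     contour_integral (linepath a1 (Complex (Re a3) (Im a1))) f
   + contour_integral (linepath (Complex (Re a3) (Im a1)) a3) f
   + contour_integral (linepath a3 (Complex (Re a1) (Im a3))) f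
   + contour_integral (linepath (Complex (Re a1) (Im a3)) a1) f"
proof -
  define a2 where "a2 = Complex (Re a3) (Im a1)"
  define a4 where "a4 = Complex (Re a1) (Im a3)"
  have pi: "path_image (rectpath a1 a3) = closed_segment a1 a2 \<union> closed_segment a2 a3 \<union> closed_segment a3 a4 \<union> closed_segment a4 a1"
    by (simp add: rectpath_def Let_def path_image_join a2_def a4_def Un_assoc)
  have c: "continuous_on (closed_segment a1 a2) f" "continuous_on (closed_segment a2 a3) f"
          "continuous_on (closed_segment a3 a4) f" "continuous_on (closed_segment a4 a1) f"
    using assms unfolding pi by (auto intro: continuous_on_subset)
  have i: "f contour_integrable_on linepath a1 a2" "f contour_integrable_on linepath a2 a3"
          "f contour_integrable_on linepath a3 a4" "f contour_integrable_on linepath a4 a1"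
    using c by (auto intro: contour_integrable_continuous_linepath)
  have "contour_integral (rectpath a1 a3) f = contour_integral (linepath a1 a2 +++ linepath a2 a3 +++ linepath a3 a4 +++ linepath a4 a1) f"
    by (simp add: rectpath_def Let_def a2_def a4_def)
  also have "\<dots> = contour_integral (linepath a1 a2) f + (contour_integral (linepath a2 a3) f + (contour_integral (linepath a3 a4) f + contour_integral (linepath a4 a1) f))"
    using i by (simp add: contour_integrable_joinI)
  finally show ?thesis by (simp add: a2_def a4_def add.assoc)
qed

lemma rect_pole:
  assumes a: "a \<in> box a1 a3"
  shows "((\<lambda>z. exp (\<i> * of_real nu * z) / (z - a)^Suc n) has_contour_integral
           (2*pi*\<i> * ((deriv ^^ n) (\<lambda>z. exp (\<i> * of_real nu * z)) a / fact n))) (rectpath a1 a3)"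
proof -
  let ?f = "\<lambda>z. exp (\<i> * of_real nu * z) / (z - a)^Suc n"
  from a have le: "Re a1 \<le> Re a3" "Im a1 \<le> Im a3" by (auto simp: in_box_complex_iff)
  have pim: "path_image (rectpath a1 a3) \<subseteq> UNIV - {a}"
    using a le by (auto simp: path_image_rectpath_cbox_minus_box)
  have holo: "?f holomorphic_on UNIV - {a}" by (auto intro!: holomorphic_intros)
  have ci: "contour_integral (rectpath a1 a3) ?f = 2*pi*\<i> * (\<Sum>p\<in>{a}. winding_number (rectpath a1 a3) p * residue ?f p)"
    by (rule Residue_theorem[OF _ _ _ holo]) (use pim in auto)
  have res: "residue ?f a = (deriv ^^ n) (\<lambda>z. exp (\<i> * of_real nu * z)) a / fact n"
    by (rule residue_holomorphic_over_power[of UNIV]) (auto intro!: holomorphic_intros)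
  have w: "winding_number (rectpath a1 a3) a = 1" using a by (rule winding_number_rectpath)
  have int: "?f contour_integrable_on rectpath a1 a3"
    by (rule contour_integrable_holomorphic_simple[OF holo]) (use pim in auto)
  show ?thesis using has_contour_integral_integral[OF int] ci res w by simp
qed

lemma deriv_exp_lin: "deriv (\<lambda>z. exp (\<i> * of_real nu * z)) a = \<i> * of_real nu * exp (\<i> * of_real nu * a)"
  by (rule DERIV_imp_deriv) (auto intro!: derivative_eq_intros)

definition Pv :: "real \<Rightarrow> real \<Rightarrow> real \<Rightarrow> complex" where
  "Pv b b' nu = 2*pi*\<i> * (\<i> * of_real nu / of_real (b*b') + of_real ((b+b')/(b*b')^2)
      + exp (\<i> * of_real nu * of_real b) / of_real (b^2*(b-b'))
      + exp (\<i> * of_real nu * of_real b') / of_real (b'^2*(b'-b)))"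

lemma pf_abs:
  fixes z p q :: complex
  assumes "p \<noteq> 0" "q \<noteq> 0" "p \<noteq> q" "z \<noteq> 0" "z \<noteq> p" "z \<noteq> q"
  shows "1 / (z^2 * (z - p) * (z - q)) = (1/(p*q)) / z^2 + ((p+q)/(p*q)^2) / z
     + (1/(p^2*(p-q))) / (z - p) + (1/(q^2*(q-p))) / (z - q)"
proof -
  have "z - p \<noteq> 0" "z - q \<noteq> 0" "p - q \<noteq> 0" "q - p \<noteq> 0" using assms by auto
  then show ?thesis using assms by (simp add: divide_simps) algebra
qed

lemma Qf_pf:
  assumes "b \<noteq> 0" "b' \<noteq> 0" "b \<noteq> b'" "z \<noteq> 0" "z \<noteq> of_real b" "z \<noteq> of_real b'"
  shows "Qf b b' z = of_real (1/(b*b')) / z^2 + of_real ((b+b')/(b*b')^2) / z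
     + of_real (1/(b^2*(b-b'))) / (z - of_real b) + of_real (1/(b'^2*(b'-b))) / (z - of_real b')"
  using pf_abs[of "of_real b" "of_real b'" z] assms unfolding Qf_def by simp

lemma rect_gnu:
  assumes "b \<noteq> 0" "b' \<noteq> 0" "b \<noteq> b'"
    and in0: "0 \<in> box a1 a3" and inb: "of_real b \<in> box a1 a3" and inb': "of_real b' \<in> box a1 a3"
  shows "(gnu b b' nu has_contour_integral Pv b b' nu) (rectpath a1 a3)"
proof -
  let ?e = "\<lambda>z. exp (\<i> * of_real nu * z)"
  have h2: "((\<lambda>z. ?e z / (z - 0)^Suc 1) has_contour_integral (2*pi*\<i> * (\<i> * of_real nu))) (rectpath a1 a3)"
    using rect_pole[OF in0, of nu 1] by (simp add: deriv_exp_lin)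
  have h1: "((\<lambda>z. ?e z / (z - 0)^Suc 0) has_contour_integral (2*pi*\<i>)) (rectpath a1 a3)"
    using rect_pole[OF in0, of nu 0] by simp
  have hb: "((\<lambda>z. ?e z / (z - of_real b)^Suc 0) has_contour_integral (2*pi*\<i> * ?e (of_real b))) (rectpath a1 a3)"
    using rect_pole[OF inb, of nu 0] by simp
  have hb': "((\<lambda>z. ?e z / (z - of_real b')^Suc 0) has_contour_integral (2*pi*\<i> * ?e (of_real b'))) (rectpath a1 a3)"
    using rect_pole[OF inb', of nu 0] by simp
  have sum: "((\<lambda>z. of_real (1/(b*b')) * (?e z / (z - 0)^Suc 1) + of_real ((b+b')/(b*b')^2) * (?e z / (z - 0)^Suc 0)
      + of_real (1/(b^2*(b-b'))) * (?e z / (z - of_real b)^Suc 0) + of_real (1/(b'^2*(b'-b))) * (?e z / (z - of_real b')^Suc 0))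
      has_contour_integral
      (of_real (1/(b*b')) * (2*pi*\<i> * (\<i> * of_real nu)) + of_real ((b+b')/(b*b')^2) * (2*pi*\<i>)
      + of_real (1/(b^2*(b-b'))) * (2*pi*\<i> * ?e (of_real b)) + of_real (1/(b'^2*(b'-b))) * (2*pi*\<i> * ?e (of_real b')))) (rectpath a1 a3)"
    by (intro has_contour_integral_add has_contour_integral_lmul h1 h2 hb hb')
  have le: "Re a1 \<le> Re a3" "Im a1 \<le> Im a3" using in0 by (auto simp: in_box_complex_iff)
  have eqv: "(of_real (1/(b*b')) * (2*pi*\<i> * (\<i> * of_real nu)) + of_real ((b+b')/(b*b')^2) * (2*pi*\<i>)
      + of_real (1/(b^2*(b-b'))) * (2*pi*\<i> * ?e (of_real b)) + of_real (1/(b'^2*(b'-b))) * (2*pi*\<i> * ?e (of_real b'))) = Pv b b' nu"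
    unfolding Pv_def by (simp add: field_simps)
  show ?thesis
  proof (rule has_contour_integral_eq[OF sum[unfolded eqv]])
    fix z assume z: "z \<in> path_image (rectpath a1 a3)"
    then have "z \<noteq> 0" "z \<noteq> of_real b" "z \<noteq> of_real b'"
      using in0 inb inb' le by (auto simp: path_image_rectpath_cbox_minus_box)
    then show "of_real (1/(b*b')) * (?e z / (z - 0)^Suc 1) + of_real ((b+b')/(b*b')^2) * (?e z / (z - 0)^Suc 0)
      + of_real (1/(b^2*(b-b'))) * (?e z / (z - of_real b)^Suc 0) + of_real (1/(b'^2*(b'-b))) * (?e z / (z - of_real b')^Suc 0)
      = gnu b b' nu z"
      unfolding gnu_def using Qf_pf[OF assms(1-3)] by (simp add: field_simps power2_eq_square)
  qed
qed

lemma Qf_bound: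
  assumes T: "T > 0" "2*\<bar>b\<bar> \<le> T" "2*\<bar>b'\<bar> \<le> T" and z: "T \<le> norm z"
  shows "norm (Qf b b' z) \<le> 4 / T^4"
proof -
  have n1: "norm (z - of_real b) \<ge> T/2"
    using norm_triangle_ineq2[of z "of_real b"] T z by (auto simp: norm_of_real)
  have n2: "norm (z - of_real b') \<ge> T/2"
    using norm_triangle_ineq2[of z "of_real b'"] T z by (auto simp: norm_of_real)
  have n0: "norm (z^2) \<ge> T^2" using z T by (simp add: norm_power power_mono)
  have "T^2 * (T/2) * (T/2) \<le> norm (z^2) * norm (z - of_real b) * norm (z - of_real b')"
    using n0 n1 n2 T by (intro mult_mono) auto
  then have le: "T^4/4 \<le> norm (z^2 * (z - of_real b) * (z - of_real b'))"
    by (simp add: norm_mult power2_eq_square power4_eq_xxxx)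
  have pos: "T^4/4 > 0" using T by simp
  have np: "norm (z^2 * (z - of_real b) * (z - of_real b')) > 0" using le pos by linarith
  have "1 / norm (z^2 * (z - of_real b) * (z - of_real b')) \<le> 1 / (T^4/4)"
    using le pos np by (intro divide_left_mono) auto
  also have "norm (Qf b b' z) = 1 / norm (z^2 * (z - of_real b) * (z - of_real b'))"
    by (simp add: Qf_def norm_divide)
  ultimately show ?thesis by simp
qed

lemma norm_exp_i: "norm (exp (\<i> * of_real nu * z)) = exp (- nu * Im z)"
  by simp

lemma gnu_bound:
  assumes T: "T > 0" "2*\<bar>b\<bar> \<le> T" "2*\<bar>b'\<bar> \<le> T" and z: "T \<le> norm z" and e: "- nu * Im z \<le> c"
  shows "norm (gnu b b' nu z) \<le> exp c * (4 / T^4)"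
proof -
  have "norm (gnu b b' nu z) = exp (- nu * Im z) * norm (Qf b b' z)"
    by (simp add: gnu_def norm_mult)
  also have "\<dots> \<le> exp c * (4 / T^4)"
    using Qf_bound[OF T z] e by (intro mult_mono) auto
  finally show ?thesis .
qed

lemma side_bound:
  assumes "continuous_on (closed_segment a c) f" "0 \<le> B" "\<And>x. x \<in> closed_segment a c \<Longrightarrow> norm (f x) \<le> B"
  shows "norm (contour_integral (linepath a c) f) \<le> B * norm (c - a)"
  by (rule contour_integral_bound_linepath[OF contour_integrable_continuous_linepath[OF assms(1)] assms(2,3)])

lemma cont_gnu: "continuous_on (UNIV - {0, of_real b, of_real b'}) (gnu b b' nu)"
  unfolding gnu_def Qf_def by (intro continuous_intros) auto

lemma norm_Complex_ge: "\<bar>x\<bar> \<le> norm (Complex x y)" "\<bar>y\<bar> \<le> norm (Complex x y)"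
  using abs_Re_le_cmod[of "Complex x y"] abs_Im_le_cmod[of "Complex x y"] by auto

lemma side_est:
  assumes bb: "b \<noteq> 0" "b' \<noteq> 0" and T: "T > 0" "2*\<bar>b\<bar> \<le> T" "2*\<bar>b'\<bar> \<le> T"
    and pts: "\<And>z. z \<in> closed_segment a c \<Longrightarrow> T \<le> norm z \<and> - nu * Im z \<le> cc"
  shows "norm (contour_integral (linepath a c) (gnu b b' nu)) \<le> exp cc * (4/T^4) * norm (c - a)"
proof (rule side_bound)
  have "closed_segment a c \<subseteq> UNIV - {0, of_real b, of_real b'}"
  proof
    fix z assume z: "z \<in> closed_segment a c"
    then have "T \<le> norm z" using pts by blast
    moreover have "norm (of_real b :: complex) < T" "norm (of_real b' :: complex) < T"
      using bb T by (auto simp: norm_of_real)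
    ultimately show "z \<in> UNIV - {0, of_real b, of_real b'}" using T by auto
  qed
  then show "continuous_on (closed_segment a c) (gnu b b' nu)"
    using cont_gnu continuous_on_subset by blast
  show "0 \<le> exp cc * (4 / T ^ 4)" using T by simp
  fix z assume "z \<in> closed_segment a c"
  then show "norm (gnu b b' nu z) \<le> exp cc * (4 / T ^ 4)"
    using pts gnu_bound[OF T] by blast
qed

lemma seg_vert: "Re a = x \<Longrightarrow> Re c = x \<Longrightarrow> z \<in> closed_segment a c \<Longrightarrow> Re z = x \<and> min (Im a) (Im c) \<le> Im z \<and> Im z \<le> max (Im a) (Im c)"
  by (auto simp: closed_segment_same_Re closed_segment_eq_real_ivl split: if_splits)

lemma seg_hor: "Im a = y \<Longrightarrow> Im c = y \<Longrightarrow> z \<in> closed_segment a c \<Longrightarrow> Im z = y \<and> min (Re a) (Re c) \<le> Re z \<and> Re z \<le> max (Re a) (Re c)"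
  by (auto simp: closed_segment_same_Im closed_segment_eq_real_ivl split: if_splits)

lemma norm_ge_Re: "\<bar>Re z\<bar> \<le> norm z" and norm_ge_Im: "\<bar>Im z\<bar> \<le> norm z"
  by (rule abs_Re_le_cmod) (rule abs_Im_le_cmod)

lemma norm_Complex_diff: "norm (Complex a b - Complex c d) = sqrt ((a-c)^2 + (b-d)^2)"
  by (simp add: norm_complex_def)

lemma nuIm: "0 \<le> nu \<Longrightarrow> -1 \<le> y \<Longrightarrow> - (nu * y) \<le> (nu::real)"
  using mult_left_mono[of "-1" y nu] by simp

lemma up_lim:
  assumes bb: "b \<noteq> 0" "b' \<noteq> 0" "b \<noteq> b'" and nu: "nu \<ge> 0"
  shows "(\<lambda>n. contour_integral (linepath (Complex (- real n) (-1)) (Complex (real n) (-1))) (gnu b b' nu))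
           \<longlonglongrightarrow> Pv b b' nu"
proof -
  define err where "err n = contour_integral (linepath (Complex (real n) (-1)) (Complex (real n) (real n))) (gnu b b' nu)
     + contour_integral (linepath (Complex (real n) (real n)) (Complex (- real n) (real n))) (gnu b b' nu)
     + contour_integral (linepath (Complex (- real n) (real n)) (Complex (- real n) (-1))) (gnu b b' nu)" for n
  define N where "N = nat \<lceil>2*\<bar>b\<bar> + 2*\<bar>b'\<bar> + 2\<rceil>"
  have key: "contour_integral (linepath (Complex (- real n) (-1)) (Complex (real n) (-1))) (gnu b b' nu) = Pv b b' nu - err n
        \<and> norm (err n) \<le> 24 * exp nu / real n" if n: "n \<ge> N" for n
  proof -
    define T where "T = real n"
    have T: "T \<ge> 2*\<bar>b\<bar> + 2*\<bar>b'\<bar> + 2" using n unfolding N_def T_def by linarith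
    have T0: "T > 0" "2*\<bar>b\<bar> \<le> T" "2*\<bar>b'\<bar> \<le> T" "T \<ge> 1" using T by auto
    have bT: "\<bar>b\<bar> < T" "\<bar>b'\<bar> < T" using T bb by auto
    define a1 where "a1 = Complex (-T) (-1)"
    define a3 where "a3 = Complex T T"
    have inb: "0 \<in> box a1 a3" "of_real b \<in> box a1 a3" "of_real b' \<in> box a1 a3"
      using bT T0 by (auto simp: in_box_complex_iff a1_def a3_def)
    have le: "Re a1 \<le> Re a3" "Im a1 \<le> Im a3" using T0 by (auto simp: a1_def a3_def)
    have pim: "path_image (rectpath a1 a3) \<subseteq> UNIV - {0, of_real b, of_real b'}"
      using inb le by (auto simp: path_image_rectpath_cbox_minus_box)
    have "contour_integral (rectpath a1 a3) (gnu b b' nu) = Pv b b' nu"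
      using rect_gnu[OF bb inb] by (rule contour_integral_unique)
    moreover have "contour_integral (rectpath a1 a3) (gnu b b' nu) =
      contour_integral (linepath (Complex (- T) (-1)) (Complex T (-1))) (gnu b b' nu) + err n"
      using rect_split[OF cont_gnu pim] unfolding err_def T_def a1_def a3_def by (simp add: add.assoc)
    ultimately have eq1: "contour_integral (linepath (Complex (- T) (-1)) (Complex T (-1))) (gnu b b' nu) = Pv b b' nu - err n"
      by (simp add: algebra_simps)
    have s1: "norm (contour_integral (linepath (Complex T (-1)) (Complex T T)) (gnu b b' nu)) \<le> exp nu * (4/T^4) * (T+1)"
    proof -
      have "norm (contour_integral (linepath (Complex T (-1)) (Complex T T)) (gnu b b' nu)) \<le> exp nu * (4/T^4) * norm (Complex T T - Complex T (-1))"
      proof (rule side_est[OF bb(1,2) T0(1-3)])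
        fix z assume z: "z \<in> closed_segment (Complex T (-1)) (Complex T T)"
        from seg_vert[OF _ _ z] have "Re z = T" "-1 \<le> Im z" using T0 by auto
        then show "T \<le> norm z \<and> - nu * Im z \<le> nu" using norm_ge_Re[of z] nu T0
          by (auto intro: nuIm)
      qed
      also have "norm (Complex T T - Complex T (-1)) = T + 1" using T0 by (simp add: norm_Complex_diff)
      finally show ?thesis .
    qed
    have s2: "norm (contour_integral (linepath (Complex T T) (Complex (-T) T)) (gnu b b' nu)) \<le> exp nu * (4/T^4) * (2*T)"
    proof -
      have "norm (contour_integral (linepath (Complex T T) (Complex (-T) T)) (gnu b b' nu)) \<le> exp nu * (4/T^4) * norm (Complex (-T) T - Complex T T)"
      proof (rule side_est[OF bb(1,2) T0(1-3)])
        fix z assume z: "z \<in> closed_segment (Complex T T) (Complex (-T) T)"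
        from seg_hor[OF _ _ z] have "Im z = T" by auto
        then show "T \<le> norm z \<and> - nu * Im z \<le> nu" using norm_ge_Im[of z] nu T0
          by (auto intro: order_trans[of _ 0])
      qed
      also have "norm (Complex (-T) T - Complex T T) = 2*T"
      proof -
        have e: "(-T - T)^2 + (T - T)^2 = (2*T)^2" by (simp add: algebra_simps power2_eq_square)
        show ?thesis unfolding norm_Complex_diff e real_sqrt_abs using T0 by simp
      qed
      finally show ?thesis .
    qed
    have s3: "norm (contour_integral (linepath (Complex (-T) T) (Complex (-T) (-1))) (gnu b b' nu)) \<le> exp nu * (4/T^4) * (T+1)"
    proof -
      have "norm (contour_integral (linepath (Complex (-T) T) (Complex (-T) (-1))) (gnu b b' nu)) \<le> exp nu * (4/T^4) * norm (Complex (-T) (-1) - Complex (-T) T)"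
      proof (rule side_est[OF bb(1,2) T0(1-3)])
        fix z assume z: "z \<in> closed_segment (Complex (-T) T) (Complex (-T) (-1))"
        from seg_vert[OF _ _ z] have "Re z = -T" "-1 \<le> Im z" using T0 by auto
        then show "T \<le> norm z \<and> - nu * Im z \<le> nu" using norm_ge_Re[of z] nu T0
          by (auto intro: nuIm)
      qed
      also have "norm (Complex (-T) (-1) - Complex (-T) T) = T + 1" using T0 by (simp add: norm_Complex_diff)
      finally show ?thesis .
    qed
    have "norm (err n) \<le> exp nu * (4/T^4) * (T+1) + exp nu * (4/T^4) * (2*T) + exp nu * (4/T^4) * (T+1)"
      unfolding err_def T_def[symmetric] using s1 s2 s3 norm_triangle_ineq[THEN order_trans] by (smt (verit) norm_triangle_ineq)
    also have "\<dots> = exp nu * 4 * (4*T+2) / T^4" using T0 by (simp add: field_simps)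
    also have "\<dots> \<le> exp nu * 4 * (6*T) / T^4" using T0 by (intro divide_right_mono mult_left_mono) auto
    also have "\<dots> = 24 * exp nu / T^3" using T0 by (simp add: field_simps power_def)
    also have "\<dots> \<le> 24 * exp nu / T"
    proof -
      have "T \<le> T^3" using T0 by (simp add: power3_eq_cube) (metis mult.commute mult_le_cancel_left1 one_le_power T0(4) power2_eq_square less_le_trans zero_less_one order_trans)
      then show ?thesis using T0 by (intro divide_left_mono) auto
    qed
    finally show ?thesis using eq1 unfolding T_def by simp
  qed
  have lim0: "err \<longlonglongrightarrow> 0"
  proof (rule Lim_null_comparison)
    show "\<forall>\<^sub>F n in sequentially. norm (err n) \<le> 24 * exp nu / real n"
      using key by (auto simp: eventually_at_top_linorder)
    show "(\<lambda>n. 24 * exp nu / real n) \<longlonglongrightarrow> 0" using lim_const_over_n[of "24 * exp nu"] by simp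
  qed
  have "(\<lambda>n. Pv b b' nu - err n) \<longlonglongrightarrow> Pv b b' nu" using tendsto_diff[OF tendsto_const lim0] by simp
  then show ?thesis
    by (rule Lim_transform_eventually) (use key in \<open>force simp: eventually_at_top_linorder\<close>)
qed

lemma nuIm2: "nu \<le> 0 \<Longrightarrow> y \<le> 0 \<Longrightarrow> - (nu * y) \<le> (0::real)"
  by (simp add: mult_nonpos_nonpos)

lemma norm_vert: "norm (Complex x y1 - Complex x y2) = \<bar>y1 - y2\<bar>"
  by (simp add: norm_complex_def)

lemma norm_hor: "norm (Complex x1 y - Complex x2 y) = \<bar>x1 - x2\<bar>"
  by (simp add: norm_complex_def)

lemma norm3: "norm (a + b + c) \<le> norm a + norm b + norm (c::complex)"
  using norm_triangle_ineq[of "a+b" c] norm_triangle_ineq[of a b] by linarith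

lemma gnu_holo_lower: "gnu b b' nu holomorphic_on {z. Im z < 0}"
proof -
  have "\<And>z. Im z < 0 \<Longrightarrow> z \<noteq> 0 \<and> z \<noteq> of_real b \<and> z \<noteq> of_real b'" by auto
  then show ?thesis unfolding gnu_def Qf_def by (intro holomorphic_intros) auto
qed

lemma down_lim:
  assumes bb: "b \<noteq> 0" "b' \<noteq> 0" and nu: "nu \<le> 0"
  shows "(\<lambda>n. contour_integral (linepath (Complex (- real n) (-1)) (Complex (real n) (-1))) (gnu b b' nu))
           \<longlonglongrightarrow> 0"
proof -
  define N where "N = nat \<lceil>2*\<bar>b\<bar> + 2*\<bar>b'\<bar> + 2\<rceil>"
  have key: "norm (contour_integral (linepath (Complex (- real n) (-1)) (Complex (real n) (-1))) (gnu b b' nu)) \<le> 16 / real n"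
    if n: "n \<ge> N" for n
  proof -
    define T where "T = real n"
    have T: "T \<ge> 2*\<bar>b\<bar> + 2*\<bar>b'\<bar> + 2" using n unfolding N_def T_def by linarith
    have T0: "T > 0" "2*\<bar>b\<bar> \<le> T" "2*\<bar>b'\<bar> \<le> T" "T \<ge> 2" using T by auto
    define a1 where "a1 = Complex (-T) (-T)"
    define a3 where "a3 = Complex T (-1)"
    have le: "Re a1 \<le> Re a3" "Im a1 \<le> Im a3" using T0 by (auto simp: a1_def a3_def)
    have pim: "path_image (rectpath a1 a3) \<subseteq> {z. Im z < 0}"
      using path_image_rectpath_subset_cbox[OF le] by (auto simp: in_cbox_complex_iff a3_def)
    have "contour_integral (rectpath a1 a3) (gnu b b' nu) = 0"
      by (rule contour_integral_unique, rule Cauchy_theorem_convex_simple[OF gnu_holo_lower convex_halfspace_Im_lt])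
         (use pim in auto)
    moreover have "contour_integral (rectpath a1 a3) (gnu b b' nu) =
        contour_integral (linepath (Complex (-T) (-T)) (Complex T (-T))) (gnu b b' nu)
      + contour_integral (linepath (Complex T (-T)) (Complex T (-1))) (gnu b b' nu)
      + contour_integral (linepath (Complex T (-1)) (Complex (-T) (-1))) (gnu b b' nu)
      + contour_integral (linepath (Complex (-T) (-1)) (Complex (-T) (-T))) (gnu b b' nu)"
      using rect_split[OF holomorphic_on_imp_continuous_on[OF gnu_holo_lower] pim] unfolding a1_def a3_def by simp
    moreover have "contour_integral (linepath (Complex T (-1)) (Complex (-T) (-1))) (gnu b b' nu)
       = - contour_integral (linepath (Complex (-T) (-1)) (Complex T (-1))) (gnu b b' nu)"
    proof (rule contour_integral_reverse_linepath)
      have "closed_segment (Complex T (-1)) (Complex (-T) (-1)) \<subseteq> {z. Im z < 0}"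
        using seg_hor[of "Complex T (-1)" "-1" "Complex (-T) (-1)"] by auto
      then show "continuous_on (closed_segment (Complex T (-1)) (Complex (-T) (-1))) (gnu b b' nu)"
        using holomorphic_on_imp_continuous_on[OF gnu_holo_lower] continuous_on_subset by blast
    qed
    ultimately have eq: "contour_integral (linepath (Complex (-T) (-1)) (Complex T (-1))) (gnu b b' nu) =
        contour_integral (linepath (Complex (-T) (-T)) (Complex T (-T))) (gnu b b' nu)
      + contour_integral (linepath (Complex T (-T)) (Complex T (-1))) (gnu b b' nu)
      + contour_integral (linepath (Complex (-T) (-1)) (Complex (-T) (-T))) (gnu b b' nu)"
      by (simp add: algebra_simps)
    have s1: "norm (contour_integral (linepath (Complex (-T) (-T)) (Complex T (-T))) (gnu b b' nu)) \<le> exp 0 * (4/T^4) * (2*T)"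
    proof -
      have "norm (contour_integral (linepath (Complex (-T) (-T)) (Complex T (-T))) (gnu b b' nu)) \<le> exp 0 * (4/T^4) * norm (Complex T (-T) - Complex (-T) (-T))"
      proof (rule side_est[OF bb(1,2) T0(1-3)])
        fix z assume z: "z \<in> closed_segment (Complex (-T) (-T)) (Complex T (-T))"
        from seg_hor[OF _ _ z] have "Im z = -T" by auto
        then show "T \<le> norm z \<and> - nu * Im z \<le> 0" using norm_ge_Im[of z] nu T0
          by (auto simp: mult_nonpos_nonneg)
      qed
      also have "norm (Complex T (-T) - Complex (-T) (-T)) = 2*T"
      proof -
        have e: "(T - -T)^2 + (-T - -T)^2 = (2*T)^2" by (simp add: algebra_simps power2_eq_square)
        show ?thesis unfolding norm_Complex_diff e real_sqrt_abs using T0 by simp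
      qed
      finally show ?thesis .
    qed
    have s2: "norm (contour_integral (linepath (Complex T (-T)) (Complex T (-1))) (gnu b b' nu)) \<le> exp 0 * (4/T^4) * T"
    proof -
      have "norm (contour_integral (linepath (Complex T (-T)) (Complex T (-1))) (gnu b b' nu)) \<le> exp 0 * (4/T^4) * norm (Complex T (-1) - Complex T (-T))"
      proof (rule side_est[OF bb(1,2) T0(1-3)])
        fix z assume z: "z \<in> closed_segment (Complex T (-T)) (Complex T (-1))"
        from seg_vert[OF _ _ z] have "Re z = T" "Im z \<le> -1" using T0 by auto
        then show "T \<le> norm z \<and> - nu * Im z \<le> 0" using norm_ge_Re[of z] nu T0
          by (auto simp: mult_nonpos_nonpos)
      qed
      moreover have "norm (Complex T (-1) - Complex T (-T)) \<le> T" using T0 unfolding norm_vert by simp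
      then have "exp 0 * (4/T^4) * norm (Complex T (-1) - Complex T (-T)) \<le> exp 0 * (4/T^4) * T" using T0 by (intro mult_left_mono) auto
      ultimately show ?thesis by linarith
    qed
    have s3: "norm (contour_integral (linepath (Complex (-T) (-1)) (Complex (-T) (-T))) (gnu b b' nu)) \<le> exp 0 * (4/T^4) * T"
    proof -
      have "norm (contour_integral (linepath (Complex (-T) (-1)) (Complex (-T) (-T))) (gnu b b' nu)) \<le> exp 0 * (4/T^4) * norm (Complex (-T) (-T) - Complex (-T) (-1))"
      proof (rule side_est[OF bb(1,2) T0(1-3)])
        fix z assume z: "z \<in> closed_segment (Complex (-T) (-1)) (Complex (-T) (-T))"
        from seg_vert[OF _ _ z] have "Re z = -T" "Im z \<le> -1" using T0 by auto
        then show "T \<le> norm z \<and> - nu * Im z \<le> 0" using norm_ge_Re[of z] nu T0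
          by (auto simp: mult_nonpos_nonpos)
      qed
      moreover have "norm (Complex (-T) (-T) - Complex (-T) (-1)) \<le> T" using T0 unfolding norm_vert by simp
      then have "exp 0 * (4/T^4) * norm (Complex (-T) (-T) - Complex (-T) (-1)) \<le> exp 0 * (4/T^4) * T" using T0 by (intro mult_left_mono) auto
      ultimately show ?thesis by linarith
    qed
    have "norm (contour_integral (linepath (Complex (-T) (-1)) (Complex T (-1))) (gnu b b' nu))
        \<le> (4/T^4) * (2*T) + (4/T^4) * T + (4/T^4) * T"
      using order_trans[OF eq[THEN arg_cong[where f=norm], THEN eq_refl] norm3] s1 s2 s3
      unfolding exp_zero mult_1 by linarith
    also have "\<dots> = 16 / T^3" using T0 by (simp add: field_simps power_def)
    also have "\<dots> \<le> 16 / T"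
    proof -
      have "1 \<le> T^2" using T0 by (simp add: one_le_power)
      then have "T * 1 \<le> T * T^2" using T0 by (intro mult_left_mono) auto
      then have "T \<le> T^3" by (simp add: power3_eq_cube power2_eq_square)
      then show ?thesis using T0 by (intro divide_left_mono) auto
    qed
    finally show ?thesis unfolding T_def by simp
  qed
  show ?thesis
  proof (rule Lim_null_comparison)
    show "\<forall>\<^sub>F n in sequentially. norm (contour_integral (linepath (Complex (- real n) (-1)) (Complex (real n) (-1))) (gnu b b' nu)) \<le> 16 / real n"
      using key by (auto simp: eventually_at_top_linorder)
    show "(\<lambda>n. 16 / real n) \<longlonglongrightarrow> 0" using lim_const_over_n[of "16::real"] by simp
  qed
qed

lemma Fe_eq:
  assumes "z \<noteq> 0" "z \<noteq> of_real b" "z \<noteq> of_real b'"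
  shows "Fe b0 lam K b b' z = exp (- \<i> * of_real lam * z) * sin (of_real b0 * z) ^ 2
      * sin (of_real K * (z - of_real b)) * sin (of_real K * (z - of_real b')) * Qf b b' z"
  using assms unfolding Fe_def snc_def Qf_def by (simp add: field_simps power2_eq_square)

lemma norm_sin_le: "norm (sin w) \<le> exp \<bar>Im w\<bar>"
  using cmod_sin_le_exp[of 1 w] by simp

lemma Fe_bound:
  assumes p: "b0 \<ge> 0" "K \<ge> 0" "lam \<ge> 0" and T: "T > 0" "2*\<bar>b\<bar> \<le> T" "2*\<bar>b'\<bar> \<le> T"
    and bb: "b \<noteq> 0" "b' \<noteq> 0"
    and z: "T \<le> norm z" "-1 \<le> Im z" "Im z \<le> 0"
  shows "norm (Fe b0 lam K b b' z) \<le> exp (2*b0 + 2*K) * (4/T^4)"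
proof -
  have "norm (of_real b :: complex) < T" "norm (of_real b' :: complex) < T"
    using bb T by (auto simp: norm_of_real)
  then have nz: "z \<noteq> 0" "z \<noteq> of_real b" "z \<noteq> of_real b'" using z T by auto
  have e1: "norm (exp (- \<i> * of_real lam * z)) \<le> 1" using p z by (simp add: mult_nonneg_nonpos)
  have aI: "\<bar>Im z\<bar> \<le> 1" using z by auto
  have e2: "norm (sin (of_real b0 * z)) \<le> exp b0"
  proof -
    have "norm (sin (of_real b0 * z)) \<le> exp \<bar>b0 * Im z\<bar>" using norm_sin_le[of "of_real b0 * z"] by simp
    also have "\<dots> \<le> exp b0" using p aI by (simp add: abs_mult mult_left_le)
    finally show ?thesis .
  qed
  have e3: "norm (sin (of_real K * (z - of_real c))) \<le> exp K" for c
  proof -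
    have "norm (sin (of_real K * (z - of_real c))) \<le> exp \<bar>K * Im z\<bar>" using norm_sin_le[of "of_real K * (z - of_real c)"] by simp
    also have "\<dots> \<le> exp K" using p aI by (simp add: abs_mult mult_left_le)
    finally show ?thesis .
  qed
  have q: "norm (Qf b b' z) \<le> 4/T^4" by (rule Qf_bound[OF T z(1)])
  have "norm (Fe b0 lam K b b' z) = norm (exp (- \<i> * of_real lam * z)) * norm (sin (of_real b0 * z)) ^ 2
      * norm (sin (of_real K * (z - of_real b))) * norm (sin (of_real K * (z - of_real b'))) * norm (Qf b b' z)"
    unfolding Fe_eq[OF nz] by (simp add: norm_mult norm_power)
  also have "\<dots> \<le> 1 * (exp b0)^2 * exp K * exp K * (4/T^4)"
    by (intro mult_mono power_mono e1 e2 e3 q) auto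
  also have "\<dots> = exp (2*b0 + 2*K) * (4/T^4)"
    by (simp add: power2_eq_square exp_add[symmetric] algebra_simps)
  finally show ?thesis .
qed

lemma shift_lim:
  assumes p: "b0 \<ge> 0" "K \<ge> 0" "lam \<ge> 0" and bb: "b \<noteq> 0" "b' \<noteq> 0"
  shows "(\<lambda>n. contour_integral (linepath (Complex (- real n) 0) (Complex (real n) 0)) (Fe b0 lam K b b')
            - contour_integral (linepath (Complex (- real n) (-1)) (Complex (real n) (-1))) (Fe b0 lam K b b'))
           \<longlonglongrightarrow> 0"
proof -
  define N where "N = nat \<lceil>2*\<bar>b\<bar> + 2*\<bar>b'\<bar> + 2\<rceil>"
  define M where "M = exp (2*b0 + 2*K) * 8"
  let ?F = "Fe b0 lam K b b'"
  have key: "norm (contour_integral (linepath (Complex (- real n) 0) (Complex (real n) 0)) ?F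
            - contour_integral (linepath (Complex (- real n) (-1)) (Complex (real n) (-1))) ?F) \<le> M / real n"
    if n: "n \<ge> N" for n
  proof -
    define T where "T = real n"
    have T: "T \<ge> 2*\<bar>b\<bar> + 2*\<bar>b'\<bar> + 2" using n unfolding N_def T_def by linarith
    have T0: "T > 0" "2*\<bar>b\<bar> \<le> T" "2*\<bar>b'\<bar> \<le> T" "T \<ge> 2" using T by auto
    define a1 where "a1 = Complex (-T) (-1)"
    define a3 where "a3 = Complex T 0"
    have "contour_integral (rectpath a1 a3) ?F = 0"
      by (rule contour_integral_unique, rule Cauchy_theorem_convex_simple[OF Fe_holo convex_UNIV]) auto
    moreover have "contour_integral (rectpath a1 a3) ?F =
        contour_integral (linepath (Complex (-T) (-1)) (Complex T (-1))) ?F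
      + contour_integral (linepath (Complex T (-1)) (Complex T 0)) ?F
      + contour_integral (linepath (Complex T 0) (Complex (-T) 0)) ?F
      + contour_integral (linepath (Complex (-T) 0) (Complex (-T) (-1))) ?F"
      using rect_split[OF Fe_cont[of UNIV] subset_UNIV, of a1 a3] unfolding a1_def a3_def by simp
    moreover have "contour_integral (linepath (Complex T 0) (Complex (-T) 0)) ?F
       = - contour_integral (linepath (Complex (-T) 0) (Complex T 0)) ?F"
      by (rule contour_integral_reverse_linepath[OF Fe_cont])
    ultimately have eq: "contour_integral (linepath (Complex (-T) 0) (Complex T 0)) ?F
        - contour_integral (linepath (Complex (-T) (-1)) (Complex T (-1))) ?F =
        contour_integral (linepath (Complex T (-1)) (Complex T 0)) ?F
      + contour_integral (linepath (Complex (-T) 0) (Complex (-T) (-1))) ?F"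
      by (simp add: algebra_simps)
    have s1: "norm (contour_integral (linepath (Complex T (-1)) (Complex T 0)) ?F) \<le> exp (2*b0 + 2*K) * (4/T^4) * norm (Complex T 0 - Complex T (-1))"
    proof (rule side_bound[OF Fe_cont])
      fix z assume z: "z \<in> closed_segment (Complex T (-1)) (Complex T 0)"
      from seg_vert[OF _ _ z] have "Re z = T" "-1 \<le> Im z" "Im z \<le> 0" by auto
      then show "norm (?F z) \<le> exp (2*b0 + 2*K) * (4/T^4)"
        using norm_ge_Re[of z] by (intro Fe_bound[OF p T0(1-3) bb]) auto
    qed (use T0 in auto)
    have s2: "norm (contour_integral (linepath (Complex (-T) 0) (Complex (-T) (-1))) ?F) \<le> exp (2*b0 + 2*K) * (4/T^4) * norm (Complex (-T) (-1) - Complex (-T) 0)"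
    proof (rule side_bound[OF Fe_cont])
      fix z assume z: "z \<in> closed_segment (Complex (-T) 0) (Complex (-T) (-1))"
      from seg_vert[OF _ _ z] have "Re z = -T" "-1 \<le> Im z" "Im z \<le> 0" by auto
      then show "norm (?F z) \<le> exp (2*b0 + 2*K) * (4/T^4)"
        using norm_ge_Re[of z] by (intro Fe_bound[OF p T0(1-3) bb]) auto
    qed (use T0 in auto)
    have n1: "norm (Complex T 0 - Complex T (-1)) = 1" "norm (Complex (-T) (-1) - Complex (-T) 0) = 1"
      unfolding norm_vert by simp_all
    have "norm (contour_integral (linepath (Complex (-T) 0) (Complex T 0)) ?F
        - contour_integral (linepath (Complex (-T) (-1)) (Complex T (-1))) ?F) \<le> 2 * (exp (2*b0 + 2*K) * (4/T^4))"
      unfolding eq using norm_triangle_ineq[of "contour_integral (linepath (Complex T (-1)) (Complex T 0)) ?F"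
          "contour_integral (linepath (Complex (-T) 0) (Complex (-T) (-1))) ?F"] s1 s2 unfolding n1 by linarith
    also have "\<dots> = M / T^4" unfolding M_def by simp
    also have "\<dots> \<le> M / T"
    proof -
      have "1 \<le> T^3" using T0 by (simp add: one_le_power)
      then have "T * 1 \<le> T * T^3" using T0 by (intro mult_left_mono) auto
      then have "T \<le> T^4" by (simp add: power_Suc[symmetric] del: power_Suc)
      then show ?thesis using T0 unfolding M_def by (intro divide_left_mono) auto
    qed
    finally show ?thesis unfolding T_def by simp
  qed
  show ?thesis
  proof (rule Lim_null_comparison)
    show "\<forall>\<^sub>F n in sequentially. norm (contour_integral (linepath (Complex (- real n) 0) (Complex (real n) 0)) ?F
            - contour_integral (linepath (Complex (- real n) (-1)) (Complex (real n) (-1))) ?F) \<le> M / real n"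
      using key by (auto simp: eventually_at_top_linorder)
    show "(\<lambda>n. M / real n) \<longlonglongrightarrow> 0" using lim_const_over_n[of M] by simp
  qed
qed

lemma sinc_bound: "\<bar>sin (K * y) / y\<bar> \<le> \<bar>K::real\<bar>"
proof (cases "y = 0")
  case False
  have "\<bar>sin (K * y)\<bar> \<le> \<bar>K\<bar> * \<bar>y\<bar>" using abs_sin_x_le_abs_x[of "K*y"] by (simp add: abs_mult)
  then show ?thesis using False by (simp add: abs_divide divide_le_eq)
qed simp

lemma sinsq_bound:
  assumes b0: "(b0::real) > 0"
  shows "\<bar>(sin (b0 * x))^2 / x^2\<bar> \<le> 2 * (b0^2 + 1) * inverse (1 + x^2)"
proof -
  have d: "1 + x^2 > 0" by (simp add: add_pos_nonneg)
  have rhs: "2 * (b0^2 + 1) * inverse (1 + x^2) = 2 * (b0^2 + 1) / (1 + x^2)" by (simp add: field_simps)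
  have lhs: "\<bar>(sin (b0 * x))^2 / x^2\<bar> = (sin (b0 * x))^2 / x^2" by simp
  show ?thesis
  proof (cases "\<bar>x\<bar> \<le> 1")
    case True
    define s where "s = sin (b0 * x) / x"
    have "\<bar>s\<bar> \<le> b0" using sinc_bound[of b0 x] b0 unfolding s_def by simp
    then have "\<bar>s\<bar>^2 \<le> b0^2" by (intro power_mono) auto
    then have s2: "(sin (b0 * x))^2 / x^2 \<le> b0^2" unfolding s_def by (simp add: power_divide)
    have "\<bar>x\<bar>^2 \<le> 1^2" using True by (intro power_mono) auto
    then have x2: "x^2 \<le> 1" by simp
    have "b0^2 * (1 + x^2) \<le> b0^2 * 2" using x2 by (intro mult_left_mono) auto
    then have "b0^2 * (1 + x^2) \<le> 2 * (b0^2 + 1)" by (simp add: algebra_simps)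
    then have "b0^2 \<le> 2 * (b0^2 + 1) / (1 + x^2)" using d by (simp add: le_divide_eq)
    then show ?thesis using s2 unfolding lhs rhs by linarith
  next
    case False
    have "1^2 \<le> \<bar>x\<bar>^2" using False by (intro power_mono) auto
    then have x2: "1 \<le> x^2" by simp
    have "(sin (b0 * x))^2 \<le> 1" by (simp add: abs_square_le_1)
    then have "(sin (b0 * x))^2 / x^2 \<le> 1 / x^2" using x2 by (intro divide_right_mono) auto
    also have "\<dots> \<le> 2 / (1 + x^2)" using x2 d by (simp add: divide_simps)
    also have "\<dots> \<le> 2 * (b0^2 + 1) / (1 + x^2)" using d by (intro divide_right_mono) auto
    finally show ?thesis unfolding lhs rhs .
  qed
qed


lemma integrand_meas: "Spm_integrand al g0 k0 b0 lam dt b b' \<in> borel_measurable lborel"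
  unfolding Spm_integrand_def Let_def by measurable

lemma integrand_bound:
  assumes b0: "(b0::real) > 0"
  shows "norm (Spm_integrand al g0 k0 b0 lam dt b b' x) \<le> (Kc al g0 k0 lam dt)^2 * (2*(b0^2+1)) * inverse (1+x^2)"
proof -
  define K where "K = Kc al g0 k0 lam dt"
  have n: "norm (Spm_integrand al g0 k0 b0 lam dt b b' x) =
     \<bar>(sin (b0 * x))\<^sup>2 / x\<^sup>2\<bar> * \<bar>sin (K * (b - x)) / (b - x)\<bar> * \<bar>sin (K * (x - b')) / (x - b')\<bar>"
  proof -
    have e: "norm (exp (- \<i> * complex_of_real (lam * x))) = 1" by simp
    show ?thesis unfolding Spm_integrand_def Let_def K_def norm_mult e norm_of_real by (simp only: abs_mult mult_1_left)
  qed
  have "\<bar>(sin (b0 * x))\<^sup>2 / x\<^sup>2\<bar> * \<bar>sin (K * (b - x)) / (b - x)\<bar> * \<bar>sin (K * (x - b')) / (x - b')\<bar>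
     \<le> (2*(b0^2+1) * inverse (1+x^2)) * \<bar>K\<bar> * \<bar>K\<bar>"
    by (intro mult_mono sinsq_bound[OF b0] sinc_bound) (auto simp: add_pos_nonneg)
  also have "\<dots> = K^2 * (2*(b0^2+1)) * inverse (1+x^2)" by (simp add: power2_eq_square abs_mult_self_eq)
  finally show ?thesis unfolding n K_def .
qed

lemma integrand_integrable:
  assumes b0: "(b0::real) > 0"
  shows "integrable lborel (Spm_integrand al g0 k0 b0 lam dt b b')"
proof (rule Bochner_Integration.integrable_bound[OF _ integrand_meas])
  have "integrable lborel (\<lambda>x. inverse (1 + x^2) :: real)"
    using integrable_inverse_1_plus_square unfolding set_integrable_def by simp
  then show "integrable lborel (\<lambda>x. (Kc al g0 k0 lam dt)^2 * (2*(b0^2+1)) * inverse (1+x^2))"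
    by (intro integrable_mult_right)
  show "AE x in lborel. norm (Spm_integrand al g0 k0 b0 lam dt b b' x) \<le> norm ((Kc al g0 k0 lam dt)^2 * (2*(b0^2+1)) * inverse (1+x^2))"
    using integrand_bound[OF b0] by (auto intro: order_trans[OF _ abs_ge_self])
qed

lemma lim_real:
  assumes b0: "(b0::real) > 0"
  shows "(\<lambda>n. integral {- real n..real n} (Spm_integrand al g0 k0 b0 lam dt b b'))
           \<longlonglongrightarrow> (LINT x|lborel. Spm_integrand al g0 k0 b0 lam dt b b' x)"
proof -
  let ?g = "Spm_integrand al g0 k0 b0 lam dt b b'"
  have int: "integrable lborel ?g" by (rule integrand_integrable[OF b0])
  have "(\<lambda>n. integral\<^sup>L lborel (\<lambda>x. indicator {- real n..real n} x *\<^sub>R ?g x)) \<longlonglongrightarrow> integral\<^sup>L lborel ?g"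
  proof (rule integral_dominated_convergence[where w="\<lambda>x. norm (?g x)"])
    show "?g \<in> borel_measurable lborel" by (rule integrand_meas)
    show "\<And>n. (\<lambda>x. indicator {- real n..real n} x *\<^sub>R ?g x) \<in> borel_measurable lborel"
      using integrand_meas by measurable
    show "integrable lborel (\<lambda>x. norm (?g x))" using int by (rule integrable_norm)
    show "AE x in lborel. (\<lambda>n. indicator {- real n..real n} x *\<^sub>R ?g x) \<longlonglongrightarrow> ?g x"
    proof (rule AE_I2)
      fix x :: real
      have "\<forall>\<^sub>F n in sequentially. indicator {- real n..real n} x *\<^sub>R ?g x = ?g x"
      proof (rule eventually_sequentiallyI[of "nat \<lceil>\<bar>x\<bar>\<rceil>"])
        fix n assume "nat \<lceil>\<bar>x\<bar>\<rceil> \<le> n"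
        then have "\<bar>x\<bar> \<le> real n" by linarith
        then show "indicator {- real n..real n} x *\<^sub>R ?g x = ?g x" by (auto simp: indicator_def)
      qed
      then show "(\<lambda>n. indicator {- real n..real n} x *\<^sub>R ?g x) \<longlonglongrightarrow> ?g x"
        by (rule tendsto_eventually)
    qed
    show "\<And>n. AE x in lborel. norm (indicator {- real n..real n} x *\<^sub>R ?g x) \<le> norm (?g x)"
      by (auto simp: indicator_def)
  qed
  moreover have "integral\<^sup>L lborel (\<lambda>x. indicator {- real n..real n} x *\<^sub>R ?g x) = integral {- real n..real n} ?g" for n
  proof -
    have "set_integrable lborel {- real n..real n} ?g"
      unfolding set_integrable_def by (rule integrable_mult_indicator) (auto simp: int)
    from set_borel_integral_eq_integral(2)[OF this] show ?thesis unfolding set_lebesgue_integral_def .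
  qed
  ultimately show ?thesis by simp
qed

lemma sinc_flip: "sin (K * (x - a)) / (x - a) = sin (K * (a - x)) / (a - (x::real))"
proof -
  have e: "K * (x - a) = - (K * (a - x))" by (simp add: algebra_simps)
  have s1: "sin (K * (x - a)) = - sin (K * (a - x))" unfolding e by (rule sin_minus)
  have e2: "x - a = - (a - x)" by simp
  show ?thesis unfolding s1 by (subst e2) (rule minus_divide_divide)
qed

lemma Fe_real:
  assumes "x \<noteq> 0" "x \<noteq> b" "x \<noteq> b'"
  shows "Fe b0 lam (Kc al g0 k0 lam dt) b b' (of_real x) = Spm_integrand al g0 k0 b0 lam dt b b' x"
proof -
  have "snc b0 0 (of_real x) = of_real (sin (b0 * x) / x)" using snc_of_real[of x 0 b0] assms by simp
  moreover have "snc (Kc al g0 k0 lam dt) b (of_real x) = of_real (sin (Kc al g0 k0 lam dt * (b - x)) / (b - x))"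
    using snc_of_real[of x b] assms by (simp add: sinc_flip)
  moreover have "snc (Kc al g0 k0 lam dt) b' (of_real x) = of_real (sin (Kc al g0 k0 lam dt * (x - b')) / (x - b'))"
    using snc_of_real[of x b'] assms by simp
  ultimately show ?thesis unfolding Fe_def Spm_integrand_def Let_def
    by (simp add: power_divide mult_ac)
qed

lemma real_to_contour:
  assumes n: "n > 0"
  shows "integral {- real n..real n} (Spm_integrand al g0 k0 b0 lam dt b b')
     = contour_integral (linepath (Complex (- real n) 0) (Complex (real n) 0)) (Fe b0 lam (Kc al g0 k0 lam dt) b b')"
proof -
  have c: "Complex (- real n) 0 = of_real (- real n)" "Complex (real n) 0 = of_real (real n)"
    by (simp_all add: complex_eq_iff)
  have "contour_integral (linepath (Complex (- real n) 0) (Complex (real n) 0)) (Fe b0 lam (Kc al g0 k0 lam dt) b b')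
      = integral {- real n..real n} (\<lambda>x. Fe b0 lam (Kc al g0 k0 lam dt) b b' (of_real x))"
    unfolding c using n by (subst contour_integral_linepath_Reals_eq) auto
  also have "\<dots> = integral {- real n..real n} (Spm_integrand al g0 k0 b0 lam dt b b')"
    by (rule integral_spike[of "{0, b, b'}"]) (auto simp: Fe_real)
  finally show ?thesis by simp
qed

lemma Fe_expand:
  assumes "z \<noteq> 0" "z \<noteq> of_real b" "z \<noteq> of_real b'"
  shows "Fe b0 lam K b b' z =
      (-1/4) * cpp K b b' * gnu b b' (2*b0+2*K-lam) z
    + (1/2) * cpp K b b' * gnu b b' (2*K-lam) z
    + (-1/4) * cpp K b b' * gnu b b' (-2*b0+2*K-lam) z
    + (-1/4) * cp0 K b b' * gnu b b' (2*b0-lam) z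
    + (1/2) * cp0 K b b' * gnu b b' (-lam) z
    + (-1/4) * cp0 K b b' * gnu b b' (-2*b0-lam) z
    + (-1/4) * cpm K b b' * gnu b b' (2*b0-2*K-lam) z
    + (1/2) * cpm K b b' * gnu b b' (-2*K-lam) z
    + (-1/4) * cpm K b b' * gnu b b' (-2*b0-2*K-lam) z"
  unfolding Fe_eq[OF assms] E_expand gnu_def by (simp add: algebra_simps)

definition lowp :: "nat \<Rightarrow> real \<Rightarrow> complex" where
  "lowp n = linepath (Complex (- real n) (-1)) (Complex (real n) (-1))"

lemma lowp_nopole:
  assumes "z \<in> path_image (lowp n)"
  shows "z \<noteq> 0" "z \<noteq> of_real b" "z \<noteq> of_real b'"
proof -
  have "Im z = -1" using assms unfolding lowp_def
    using seg_hor[of "Complex (- real n) (-1)" "-1" "Complex (real n) (-1)" z] by auto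
  then show "z \<noteq> 0" "z \<noteq> of_real b" "z \<noteq> of_real b'" by auto
qed

lemma lower_ci: "gnu b b' nu contour_integrable_on lowp n"
proof -
  have "closed_segment (Complex (- real n) (-1)) (Complex (real n) (-1)) \<subseteq> UNIV - {0, of_real b, of_real b'}"
  proof
    fix z assume "z \<in> closed_segment (Complex (- real n) (-1)) (Complex (real n) (-1))"
    then have "z \<in> path_image (lowp n)" unfolding lowp_def by simp
    then show "z \<in> UNIV - {0, of_real b, of_real b'}" by (auto dest: lowp_nopole)
  qed
  then show ?thesis unfolding lowp_def
    by (intro contour_integrable_continuous_linepath continuous_on_subset[OF cont_gnu])
qed

lemma lower_Fe:
  "contour_integral (lowp n) (Fe b0 lam K b b') =
      (-1/4) * cpp K b b' * contour_integral (lowp n) (gnu b b' (2*b0+2*K-lam))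
    + (1/2) * cpp K b b' * contour_integral (lowp n) (gnu b b' (2*K-lam))
    + (-1/4) * cpp K b b' * contour_integral (lowp n) (gnu b b' (-2*b0+2*K-lam))
    + (-1/4) * cp0 K b b' * contour_integral (lowp n) (gnu b b' (2*b0-lam))
    + (1/2) * cp0 K b b' * contour_integral (lowp n) (gnu b b' (-lam))
    + (-1/4) * cp0 K b b' * contour_integral (lowp n) (gnu b b' (-2*b0-lam))
    + (-1/4) * cpm K b b' * contour_integral (lowp n) (gnu b b' (2*b0-2*K-lam))
    + (1/2) * cpm K b b' * contour_integral (lowp n) (gnu b b' (-2*K-lam))
    + (-1/4) * cpm K b b' * contour_integral (lowp n) (gnu b b' (-2*b0-2*K-lam))" (is "?lhs = ?rhs")
proof -
  have "contour_integral (lowp n) (Fe b0 lam K b b') = contour_integral (lowp n) (\<lambda>z.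
      (-1/4) * cpp K b b' * gnu b b' (2*b0+2*K-lam) z
    + (1/2) * cpp K b b' * gnu b b' (2*K-lam) z
    + (-1/4) * cpp K b b' * gnu b b' (-2*b0+2*K-lam) z
    + (-1/4) * cp0 K b b' * gnu b b' (2*b0-lam) z
    + (1/2) * cp0 K b b' * gnu b b' (-lam) z
    + (-1/4) * cp0 K b b' * gnu b b' (-2*b0-lam) z
    + (-1/4) * cpm K b b' * gnu b b' (2*b0-2*K-lam) z
    + (1/2) * cpm K b b' * gnu b b' (-2*K-lam) z
    + (-1/4) * cpm K b b' * gnu b b' (-2*b0-2*K-lam) z)"
    by (rule contour_integral_eq, rule Fe_expand) (auto dest: lowp_nopole)
  also have "\<dots> = ?rhs"
  proof (rule contour_integral_unique)
    have h: "\<And>nu. (gnu b b' nu has_contour_integral contour_integral (lowp n) (gnu b b' nu)) (lowp n)"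
      by (rule has_contour_integral_integral[OF lower_ci])
    show "((\<lambda>z. (-1/4) * cpp K b b' * gnu b b' (2*b0+2*K-lam) z
    + (1/2) * cpp K b b' * gnu b b' (2*K-lam) z
    + (-1/4) * cpp K b b' * gnu b b' (-2*b0+2*K-lam) z
    + (-1/4) * cp0 K b b' * gnu b b' (2*b0-lam) z
    + (1/2) * cp0 K b b' * gnu b b' (-lam) z
    + (-1/4) * cp0 K b b' * gnu b b' (-2*b0-lam) z
    + (-1/4) * cpm K b b' * gnu b b' (2*b0-2*K-lam) z
    + (1/2) * cpm K b b' * gnu b b' (-2*K-lam) z
    + (-1/4) * cpm K b b' * gnu b b' (-2*b0-2*K-lam) z) has_contour_integral ?rhs) (lowp n)"
      by (intro has_contour_integral_add has_contour_integral_lmul h)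
  qed
  finally show ?thesis .
qed

lemma lim_gnu:
  assumes "b \<noteq> 0" "b' \<noteq> 0" "b \<noteq> b'"
  shows "(\<lambda>n. contour_integral (lowp n) (gnu b b' nu)) \<longlonglongrightarrow> (if nu \<ge> 0 then Pv b b' nu else 0)"
  using up_lim[OF assms, of nu] down_lim[OF assms(1,2), of nu] unfolding lowp_def by auto

definition Lg :: "real \<Rightarrow> real \<Rightarrow> real \<Rightarrow> complex" where
  "Lg b b' nu = (if nu \<ge> 0 then Pv b b' nu else 0)"

lemma LINT_value:
  assumes b0: "b0 > 0" and lam: "lam > 2*b0" and K: "Kc al g0 k0 lam dt > 0"
    and bb: "b \<noteq> 0" "b' \<noteq> 0" "b \<noteq> b'"
  shows "(LINT x|lborel. Spm_integrand al g0 k0 b0 lam dt b b' x) =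
      (-1/4) * cpp (Kc al g0 k0 lam dt) b b' * Lg b b' (2*b0+2*Kc al g0 k0 lam dt-lam)
    + (1/2) * cpp (Kc al g0 k0 lam dt) b b' * Lg b b' (2*Kc al g0 k0 lam dt-lam)
    + (-1/4) * cpp (Kc al g0 k0 lam dt) b b' * Lg b b' (-2*b0+2*Kc al g0 k0 lam dt-lam)"
proof -
  define K where "K = Kc al g0 k0 lam dt"
  let ?F = "Fe b0 lam K b b'"
  let ?I = "\<lambda>n. integral {- real n..real n} (Spm_integrand al g0 k0 b0 lam dt b b')"
  let ?R = "\<lambda>n. contour_integral (linepath (Complex (- real n) 0) (Complex (real n) 0)) ?F"
  let ?V = "(-1/4) * cpp K b b' * Lg b b' (2*b0+2*K-lam)
    + (1/2) * cpp K b b' * Lg b b' (2*K-lam)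
    + (-1/4) * cpp K b b' * Lg b b' (-2*b0+2*K-lam)
    + (-1/4) * cp0 K b b' * Lg b b' (2*b0-lam)
    + (1/2) * cp0 K b b' * Lg b b' (-lam)
    + (-1/4) * cp0 K b b' * Lg b b' (-2*b0-lam)
    + (-1/4) * cpm K b b' * Lg b b' (2*b0-2*K-lam)
    + (1/2) * cpm K b b' * Lg b b' (-2*K-lam)
    + (-1/4) * cpm K b b' * Lg b b' (-2*b0-2*K-lam)"
  have lowlim: "(\<lambda>n. contour_integral (lowp n) ?F) \<longlonglongrightarrow> ?V"
    unfolding lower_Fe Lg_def by (intro tendsto_intros lim_gnu[OF bb])
  have sh: "(\<lambda>n. ?R n - contour_integral (lowp n) ?F) \<longlonglongrightarrow> 0"
    using shift_lim[of b0 K lam b b'] b0 lam K bb unfolding lowp_def K_def by auto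
  have "(\<lambda>n. (?R n - contour_integral (lowp n) ?F) + contour_integral (lowp n) ?F) \<longlonglongrightarrow> 0 + ?V"
    by (intro tendsto_add sh lowlim)
  then have "?R \<longlonglongrightarrow> ?V" by simp
  moreover have "\<forall>\<^sub>F n in sequentially. ?R n = ?I n"
    using real_to_contour[of _ al g0 k0 b0 lam dt b b'] unfolding K_def
    by (intro eventually_sequentiallyI[of 1]) auto
  ultimately have "?I \<longlonglongrightarrow> ?V" by (rule Lim_transform_eventually)
  moreover have "?I \<longlonglongrightarrow> (LINT x|lborel. Spm_integrand al g0 k0 b0 lam dt b b' x)"
    by (rule lim_real[OF b0])
  ultimately have eq: "(LINT x|lborel. Spm_integrand al g0 k0 b0 lam dt b b' x) = ?V"
    using LIMSEQ_unique by blast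
  have neg: "Lg b b' nu = 0" if "nu < 0" for nu using that by (simp add: Lg_def)
  have "2*b0-lam < 0" "-lam < 0" "-2*b0-lam < 0" "2*b0-2*K-lam < 0" "-2*K-lam < 0" "-2*b0-2*K-lam < 0"
    using b0 lam K unfolding K_def by auto
  then show ?thesis unfolding eq K_def by (simp add: neg)
qed

definition Ei :: "real \<Rightarrow> complex" where "Ei x = exp (\<i> * of_real x)"

lemma Ei_add: "Ei (x + y) = Ei x * Ei y" unfolding Ei_def by (simp add: distrib_left exp_add)
lemma Ei_diff: "Ei (x - y) = Ei x / Ei y" unfolding Ei_def by (simp add: right_diff_distrib exp_diff)
lemma Ei_minus: "Ei (- x) = 1 / Ei x" unfolding Ei_def by (simp add: exp_minus field_simps)
lemma Ei_nz: "Ei x \<noteq> 0" unfolding Ei_def by simp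
lemma Ei_num: "Ei (numeral n * x) = Ei x ^ numeral n"
  unfolding Ei_def by (simp add: exp_of_nat_mult[symmetric] mult_ac)
lemma sin_Ei: "complex_of_real (sin x) = (Ei x - 1 / Ei x) / (2 * \<i>)"
  unfolding Ei_def by (simp add: sin_of_real[symmetric] sin_exp_eq exp_minus field_simps)

lemma Pv_Ei: "Pv b b' nu = 2*pi*\<i> * (\<i> * of_real nu / of_real (b*b') + of_real ((b+b')/(b*b')^2)
      + Ei (nu * b) / of_real (b^2*(b-b'))
      + Ei (nu * b') / of_real (b'^2*(b'-b)))"
  unfolding Pv_def Ei_def by (simp add: mult_ac)

lemma cpp_Ei: "cpp K b b' = - 1 / (4 * Ei (K*b) * Ei (K*b'))"
proof -
  have e: "exp (- \<i> * of_real (K*(b+b'))) = Ei (-(K*b + K*b'))" unfolding Ei_def by (simp add: algebra_simps)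
  show ?thesis unfolding cpp_def e Ei_minus Ei_add using Ei_nz[of "K*b"] Ei_nz[of "K*b'"] by (simp add: field_simps)
qed

definition Sx :: "real \<Rightarrow> real \<Rightarrow> real \<Rightarrow> complex" where
  "Sx b b' nu = \<i> * of_real nu / of_real (b*b') + of_real ((b+b')/(b*b')^2)
      + Ei (nu * b) / of_real (b^2*(b-b')) + Ei (nu * b') / of_real (b'^2*(b'-b))"

lemma Pv_Sx: "Pv b b' nu = 2*pi*\<i> * Sx b b' nu"
  unfolding Pv_Ei Sx_def ..

lemma scal:
  assumes "B1 \<noteq> 0" "B2 \<noteq> 0" "b0 \<noteq> 0"
  shows "of_real (C^2/(b0*pi)) * ((-1/4) * (-1/(4*B1*B2)) * (2*pi*\<i>*S1) + (1/2) * (-1/(4*B1*B2)) * (2*pi*\<i>*S2)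
          + (-1/4) * (-1/(4*B1*B2)) * (2*pi*\<i>*S3))
       = of_real (C^2/(8*b0)) * (\<i>/(B1*B2) * (S1 - 2*S2 + S3))"
  using assms by (simp add: field_simps)

lemma sinsq_Ei: "complex_of_real ((sin x)^2) = (2 - Ei x^2 - 1/Ei x^2)/4"
proof -
  have "Ei x \<noteq> 0" by (rule Ei_nz)
  then show ?thesis unfolding of_real_power sin_Ei by (simp add: field_simps power2_eq_square)
qed

lemma red_lin:
  fixes b b' B1 B2 :: complex
  assumes nz: "b \<noteq> 0" "b' \<noteq> 0" "B1 \<noteq> 0" "B2 \<noteq> 0"
  shows "\<i>/(B1*B2) * (\<i> * nu/(b*b') + c * ((b+b')/(b*b')^2)) = (- nu + c * (\<i>*((b+b')/(b*b')))) * (1/(B1*B2)) / (b*b')"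
proof -
  have t1: "\<i>/(B1*B2) * (\<i> * nu/(b*b')) = - nu * (1/(B1*B2)) / (b*b')"
    using nz by (simp add: field_simps)
  have t2: "\<i>/(B1*B2) * (c * ((b+b')/(b*b')^2)) = c * (\<i>*((b+b')/(b*b'))) * (1/(B1*B2)) / (b*b')"
    using nz by (simp add: field_simps power2_eq_square)
  show ?thesis unfolding distrib_left t1 t2 by (simp add: distrib_right add_divide_distrib diff_divide_distrib)
qed

lemma red_b:
  fixes b b' B1 B2 :: complex
  assumes nz: "b \<noteq> 0" "b - b' \<noteq> 0" "B1 \<noteq> 0" "B2 \<noteq> 0" "L1 \<noteq> 0"
  shows "\<i>/(B1*B2) * (X*B1^2/L1/(b^2*(b-b'))) = \<i>*X/L1/(b^2) * (B1/B2) / (b-b')"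
  using nz by (simp add: field_simps power2_eq_square)

lemma red_b':
  fixes b b' B1 B2 :: complex
  assumes nz: "b' \<noteq> 0" "b - b' \<noteq> 0" "B1 \<noteq> 0" "B2 \<noteq> 0" "L2 \<noteq> 0"
  shows "\<i>/(B1*B2) * (X*B2^2/L2/(b'^2*(b'-b))) = - (\<i>*X/L2/(b'^2)*(B2/B1)/(b-b'))"
proof -
  have "b' - b = - (b - b')" by simp
  then show ?thesis using nz by (simp add: field_simps power2_eq_square)
qed

lemma conv_nu:
  "Ei ((2*b0+2*K-lam)*x) = Ei (b0*x)^2 * Ei (K*x)^2 / Ei (lam*x)"
  "Ei ((2*K-lam)*x) = Ei (K*x)^2 / Ei (lam*x)"
  "Ei ((-2*b0+2*K-lam)*x) = Ei (K*x)^2 / (Ei (lam*x) * Ei (b0*x)^2)"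
proof -
  have "(2*b0+2*K-lam)*x = 2*(b0*x) + 2*(K*x) - lam*x" by (simp add: algebra_simps)
  then show "Ei ((2*b0+2*K-lam)*x) = Ei (b0*x)^2 * Ei (K*x)^2 / Ei (lam*x)" by (simp only: Ei_add Ei_diff Ei_num)
  have "(2*K-lam)*x = 2*(K*x) - lam*x" by (simp add: algebra_simps)
  then show "Ei ((2*K-lam)*x) = Ei (K*x)^2 / Ei (lam*x)" by (simp only: Ei_add Ei_diff Ei_num)
  have "(-2*b0+2*K-lam)*x = 2*(K*x) - (lam*x + 2*(b0*x))" by (simp add: algebra_simps)
  then show "Ei ((-2*b0+2*K-lam)*x) = Ei (K*x)^2 / (Ei (lam*x) * Ei (b0*x)^2)" by (simp only: Ei_add Ei_diff Ei_num)
qed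

lemma conv_K:
  "exp (\<i> * of_real (K * (b - b'))) = Ei (K*b) / Ei (K*b')"
  "exp (- \<i> * of_real (K * (b - b'))) = Ei (K*b') / Ei (K*b)"
  "exp (- \<i> * of_real (K * (b + b'))) = 1 / (Ei (K*b) * Ei (K*b'))"
proof -
  have "exp (\<i> * of_real (K * (b - b'))) = Ei (K*b - K*b')" unfolding Ei_def by (simp add: algebra_simps)
  then show "exp (\<i> * of_real (K * (b - b'))) = Ei (K*b) / Ei (K*b')" by (simp add: Ei_diff)
  have "exp (- \<i> * of_real (K * (b - b'))) = Ei (K*b' - K*b)" unfolding Ei_def by (simp add: algebra_simps)
  then show "exp (- \<i> * of_real (K * (b - b'))) = Ei (K*b') / Ei (K*b)" by (simp add: Ei_diff)
  have "exp (- \<i> * of_real (K * (b + b'))) = Ei (-(K*b + K*b'))" unfolding Ei_def by (simp add: algebra_simps)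
  then show "exp (- \<i> * of_real (K * (b + b'))) = 1 / (Ei (K*b) * Ei (K*b'))" unfolding Ei_minus Ei_add by simp
qed

lemma h_conv: "h_aux b0 lam x = \<i> * Ei (b0*x)^2 / Ei (lam*x) / of_real (x^2)"
proof -
  have "exp (- \<i> * complex_of_real ((lam - 2 * b0) * x)) = Ei (2*(b0*x) - lam*x)"
    unfolding Ei_def by (simp add: algebra_simps)
  then show ?thesis unfolding h_aux_def by (simp add: Ei_diff Ei_num)
qed

lemma f_conv: "f_aux b0 lam x = \<i> * (2 - Ei (b0*x)^2) / Ei (lam*x) / of_real (x^2)"
proof -
  have e1: "exp (- \<i> * complex_of_real (lam * x)) = 1 / Ei (lam*x)" unfolding Ei_def by (simp add: exp_minus field_simps)
  have e2: "exp (- 2 * \<i> * complex_of_real (b0 * x)) = 1 / Ei (b0*x)^2"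
  proof -
    have "exp (- 2 * \<i> * complex_of_real (b0 * x)) = Ei (- (2 * (b0*x)))" unfolding Ei_def by (simp add: algebra_simps)
    then show ?thesis by (simp add: Ei_minus Ei_num)
  qed
  have e3: "complex_of_real (4 * (sin (b0 * x))\<^sup>2) = 4 * ((2 - Ei (b0*x)^2 - 1/Ei (b0*x)^2)/4)"
    by (simp only: of_real_mult of_real_numeral sinsq_Ei)
  have nz: "Ei (b0*x) \<noteq> 0" "Ei (lam*x) \<noteq> 0" by (rule Ei_nz)+
  have num: "\<i> * (1 / Ei (lam*x)) * (4 * ((2 - Ei (b0*x)^2 - 1/Ei (b0*x)^2)/4) + 1 / Ei (b0*x)^2)
      = \<i> * (2 - Ei (b0*x)^2) / Ei (lam*x)"
    using nz by (simp add: field_simps)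
  show ?thesis unfolding f_aux_def e1 e2 e3 num ..
qed

lemma lin_r:
  assumes "b \<noteq> 0" "b' \<noteq> 0" "B1 \<noteq> 0" "B2 \<noteq> 0"
  shows "\<i>/(B1*B2) * (\<i> * of_real nu / of_real (b*b') + c * of_real ((b+b')/(b*b')^2))
     = (of_real (- nu) + c * (\<i> * of_real ((b+b')/(b*b')))) * (1/(B1*B2)) / of_real (b*b')"
proof -
  have t1: "\<i>/(B1*B2) * (\<i> * of_real nu / of_real (b*b')) = of_real (- nu) * (1/(B1*B2)) / of_real (b*b')"
    using assms by (simp add: field_simps)
  have t2: "\<i>/(B1*B2) * (c * of_real ((b+b')/(b*b')^2)) = c * (\<i> * of_real ((b+b')/(b*b'))) * (1/(B1*B2)) / of_real (b*b')"
    using assms by (simp add: field_simps power2_eq_square)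
  show ?thesis unfolding distrib_left t1 t2 by (simp add: distrib_right add_divide_distrib diff_divide_distrib)
qed

lemma tb_r:
  assumes "b \<noteq> 0" "b \<noteq> b'" "B1 \<noteq> 0" "B2 \<noteq> 0" "L1 \<noteq> 0"
  shows "\<i>/(B1*B2) * (X*B1^2/L1/of_real (b^2*(b-b'))) = \<i>*X/L1/of_real (b^2) * (B1/B2) / of_real (b-b')"
proof -
  have nz: "complex_of_real b \<noteq> 0" "complex_of_real b - of_real b' \<noteq> 0" using assms by auto
  have c: "complex_of_real (b^2*(b-b')) = (of_real b)^2 * (of_real b - of_real b')"
    "complex_of_real (b^2) = (of_real b)^2" "complex_of_real (b - b') = of_real b - of_real b'" by simp_all
  show ?thesis unfolding c by (rule red_b[OF nz assms(3-5)])
qed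

lemma tb'_r:
  assumes "b' \<noteq> 0" "b \<noteq> b'" "B1 \<noteq> 0" "B2 \<noteq> 0" "L2 \<noteq> 0"
  shows "\<i>/(B1*B2) * (X*B2^2/L2/of_real (b'^2*(b'-b))) = - (\<i>*X/L2/of_real (b'^2) * (B2/B1) / of_real (b-b'))"
proof -
  have nz: "complex_of_real b' \<noteq> 0" "complex_of_real b - of_real b' \<noteq> 0" using assms by auto
  have c: "complex_of_real (b'^2*(b'-b)) = (of_real b')^2 * (of_real b' - of_real b)"
    "complex_of_real (b'^2) = (of_real b')^2" "complex_of_real (b - b') = of_real b - of_real b'" by simp_all
  show ?thesis unfolding c by (rule red_b'[OF nz assms(3-5)])
qed

lemma conv_nu':
  "Ei ((2*b0+2*K-lam)*x) = Ei (b0*x)^2 * (Ei (K*x)^2 / Ei (lam*x))"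
  "Ei ((2*K-lam)*x) = 1 * (Ei (K*x)^2 / Ei (lam*x))"
  "Ei ((-2*b0+2*K-lam)*x) = (1 / Ei (b0*x)^2) * (Ei (K*x)^2 / Ei (lam*x))"
  unfolding conv_nu by simp_all

lemma tb_r':
  assumes "b \<noteq> 0" "b \<noteq> b'" "B1 \<noteq> 0" "B2 \<noteq> 0" "L1 \<noteq> 0"
  shows "\<i>/(B1*B2) * (X*(B1^2/L1)/of_real (b^2*(b-b'))) = \<i>*X/L1/of_real (b^2) * (B1/B2) / of_real (b-b')"
proof -
  have "X*(B1^2/L1) = X*B1^2/L1" by simp
  then show ?thesis using tb_r[OF assms] by simp
qed

lemma tb'_r':
  assumes "b' \<noteq> 0" "b \<noteq> b'" "B1 \<noteq> 0" "B2 \<noteq> 0" "L2 \<noteq> 0"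
  shows "\<i>/(B1*B2) * (X*(B2^2/L2)/of_real (b'^2*(b'-b))) = - (\<i>*X/L2/of_real (b'^2) * (B2/B1) / of_real (b-b'))"
proof -
  have "X*(B2^2/L2) = X*B2^2/L2" by simp
  then show ?thesis using tb'_r[OF assms] by simp
qed

lemma comb:
  fixes n1 n2 n3 d e X1 X2 X3 Y1 Y2 Y3 Q R D1 D2 :: complex
  shows "(\<i>*n1/d + e + X1*Q/D1 + Y1*R/D2) * a1 + (\<i>*n2/d + e + X2*Q/D1 + Y2*R/D2) * a2 + (\<i>*n3/d + e + X3*Q/D1 + Y3*R/D2) * a3
     = (\<i>*(n1*a1 + n2*a2 + n3*a3)/d + (a1+a2+a3)*e) + (X1*a1 + X2*a2 + X3*a3)*Q/D1 + (Y1*a1 + Y2*a2 + Y3*a3)*R/D2"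
  by (simp add: algebra_simps add_divide_distrib diff_divide_distrib)

lemma Sx_conv:
  "Sx b b' (2*b0+2*K-lam) = \<i> * of_real (2*b0+2*K-lam) / of_real (b*b') + of_real ((b+b')/(b*b')^2)
      + Ei (b0*b)^2 * (Ei (K*b)^2 / Ei (lam*b)) / of_real (b^2*(b-b')) + Ei (b0*b')^2 * (Ei (K*b')^2 / Ei (lam*b')) / of_real (b'^2*(b'-b))"
  "Sx b b' (2*K-lam) = \<i> * of_real (2*K-lam) / of_real (b*b') + of_real ((b+b')/(b*b')^2)
      + 1 * (Ei (K*b)^2 / Ei (lam*b)) / of_real (b^2*(b-b')) + 1 * (Ei (K*b')^2 / Ei (lam*b')) / of_real (b'^2*(b'-b))"
  "Sx b b' (-2*b0+2*K-lam) = \<i> * of_real (-2*b0+2*K-lam) / of_real (b*b') + of_real ((b+b')/(b*b')^2)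
      + (1 / Ei (b0*b)^2) * (Ei (K*b)^2 / Ei (lam*b)) / of_real (b^2*(b-b')) + (1 / Ei (b0*b')^2) * (Ei (K*b')^2 / Ei (lam*b')) / of_real (b'^2*(b'-b))"
  unfolding Sx_def conv_nu' by simp_all

lemma Pv_zero:
  assumes "b \<noteq> 0" "b' \<noteq> 0" "b \<noteq> b'"
  shows "Pv b b' 0 = 0"
proof -
  have "b - b' \<noteq> 0" "b' - b \<noteq> 0" using assms by auto
  then have r: "(b+b')/(b*b')^2 + 1/(b^2*(b-b')) + 1/(b'^2*(b'-b)) = 0"
    using assms by (simp add: divide_simps) algebra
  have "Pv b b' 0 = 2*pi*\<i> * of_real ((b+b')/(b*b')^2 + 1/(b^2*(b-b')) + 1/(b'^2*(b'-b)))"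
    unfolding Pv_def by simp
  then show ?thesis unfolding r by simp
qed

lemma Lg_pos: "nu \<ge> 0 \<Longrightarrow> Lg b b' nu = 2*pi*\<i> * Sx b b' nu * 1"
  unfolding Lg_def Pv_Sx by simp

lemma Lg_neg:
  assumes "b \<noteq> 0" "b' \<noteq> 0" "b \<noteq> b'" "nu \<le> 0"
  shows "Lg b b' nu = 2*pi*\<i> * Sx b b' nu * 0"
proof (cases "nu = 0")
  case True then show ?thesis using Pv_zero[OF assms(1-3)] unfolding Lg_def by simp
next
  case False then show ?thesis using assms(4) unfolding Lg_def by simp
qed

lemma common:
  assumes "b0 \<noteq> 0"
  shows "of_real (C^2/(b0*pi)) * ((-1/4) * cpp K b b' * (2*pi*\<i>*S1*w1) + (1/2) * cpp K b b' * (2*pi*\<i>*S2*w2)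
            + (-1/4) * cpp K b b' * (2*pi*\<i>*S3*w3))
       = of_real (C^2/(8*b0)) * (\<i>/(Ei (K*b)*Ei (K*b')) * (S1*w1 + S2*(-2*w2) + S3*w3))"
proof -
  have "Ei (K*b) \<noteq> 0" "Ei (K*b') \<noteq> 0" "complex_of_real b0 \<noteq> 0" "complex_of_real pi \<noteq> 0" using assms Ei_nz by auto
  then show ?thesis unfolding cpp_Ei by (simp add: field_simps)
qed

lemma lin_c:
  assumes "b \<noteq> 0" "b' \<noteq> 0" "B1 \<noteq> 0" "B2 \<noteq> 0"
  shows "\<i>/(B1*B2) * (\<i> * n / of_real (b*b') + c * of_real ((b+b')/(b*b')^2))
     = (- n + c * (\<i> * of_real ((b+b')/(b*b')))) * (1/(B1*B2)) / of_real (b*b')"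
proof -
  have t1: "\<i>/(B1*B2) * (\<i> * n / of_real (b*b')) = (- n) * (1/(B1*B2)) / of_real (b*b')"
    using assms by (simp add: field_simps)
  have t2: "\<i>/(B1*B2) * (c * of_real ((b+b')/(b*b')^2)) = c * (\<i> * of_real ((b+b')/(b*b'))) * (1/(B1*B2)) / of_real (b*b')"
    using assms by (simp add: field_simps power2_eq_square)
  show ?thesis unfolding distrib_left t1 t2 by (simp add: distrib_right add_divide_distrib diff_divide_distrib)
qed

lemma br_gen:
  assumes bb: "b \<noteq> 0" "b' \<noteq> 0" "b \<noteq> b'"
  shows "\<i>/(Ei (K*b)*Ei (K*b')) * (Sx b b' (2*b0+2*K-lam) * a1 + Sx b b' (2*K-lam) * a2 + Sx b b' (-2*b0+2*K-lam) * a3)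
    = (- (of_real (2*b0+2*K-lam) * a1 + of_real (2*K-lam) * a2 + of_real (-2*b0+2*K-lam) * a3)
         + (a1+a2+a3) * (\<i> * of_real ((b+b')/(b*b')))) * (1/(Ei (K*b)*Ei (K*b'))) / of_real (b*b')
      + \<i>*(Ei (b0*b)^2 * a1 + 1 * a2 + (1 / Ei (b0*b)^2) * a3)/Ei (lam*b)/of_real (b^2) * (Ei (K*b)/Ei (K*b')) / of_real (b-b')
      + - (\<i>*(Ei (b0*b')^2 * a1 + 1 * a2 + (1 / Ei (b0*b')^2) * a3)/Ei (lam*b')/of_real (b'^2) * (Ei (K*b')/Ei (K*b)) / of_real (b-b'))"
proof -
  have nz: "Ei (K*b) \<noteq> 0" "Ei (K*b') \<noteq> 0" "Ei (lam*b) \<noteq> 0" "Ei (lam*b') \<noteq> 0" by (rule Ei_nz)+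
  let ?n = "of_real (2*b0+2*K-lam) * a1 + of_real (2*K-lam) * a2 + of_real (-2*b0+2*K-lam) * a3"
  let ?e = "complex_of_real ((b+b')/(b*b')^2)"
  let ?X = "Ei (b0*b)^2 * a1 + 1 * a2 + (1 / Ei (b0*b)^2) * a3"
  let ?Y = "Ei (b0*b')^2 * a1 + 1 * a2 + (1 / Ei (b0*b')^2) * a3"
  let ?z = "\<i>/(Ei (K*b)*Ei (K*b'))"
  have "?z * (Sx b b' (2*b0+2*K-lam) * a1 + Sx b b' (2*K-lam) * a2 + Sx b b' (-2*b0+2*K-lam) * a3)
     = ?z * ((\<i> * ?n / of_real (b*b') + (a1+a2+a3) * ?e) + ?X * (Ei (K*b)^2/Ei (lam*b)) / of_real (b^2*(b-b'))
            + ?Y * (Ei (K*b')^2/Ei (lam*b')) / of_real (b'^2*(b'-b)))"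
    unfolding Sx_conv comb ..
  also have "\<dots> = ?z * (\<i> * ?n / of_real (b*b') + (a1+a2+a3) * ?e) + ?z * (?X * (Ei (K*b)^2/Ei (lam*b)) / of_real (b^2*(b-b')))
            + ?z * (?Y * (Ei (K*b')^2/Ei (lam*b')) / of_real (b'^2*(b'-b)))"
    by (simp only: distrib_left)
  finally show ?thesis
    by (simp only: lin_c[OF bb(1,2) nz(1,2)] tb_r'[OF bb(1,3) nz(1,2,3)] tb'_r'[OF bb(2,3) nz(1,2,4)])
qed

lemma br3:
  assumes bb: "b \<noteq> 0" "b' \<noteq> 0" "b \<noteq> b'"
  shows "\<i>/(Ei (K*b)*Ei (K*b')) * (Sx b b' (2*b0+2*K-lam) * 1 + Sx b b' (2*K-lam) * (-2*0) + Sx b b' (-2*b0+2*K-lam) * 0)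
    = h_aux b0 lam b * exp (\<i> * of_real (K * (b - b'))) / of_real (b - b')
      - h_aux b0 lam b' * exp (- \<i> * of_real (K * (b - b'))) / of_real (b - b')
      + phi_aux (-1) b0 lam K b b' * exp (- \<i> * of_real (K * (b + b'))) / of_real (b * b')"
  unfolding br_gen[OF bb] h_conv conv_K phi_aux_def by (simp add: algebra_simps)

lemma br2:
  assumes bb: "b \<noteq> 0" "b' \<noteq> 0" "b \<noteq> b'"
  shows "\<i>/(Ei (K*b)*Ei (K*b')) * (Sx b b' (2*b0+2*K-lam) * 1 + Sx b b' (2*K-lam) * (-2*1) + Sx b b' (-2*b0+2*K-lam) * 0)
    = f_aux b0 lam b' * exp (- \<i> * of_real (K * (b - b'))) / of_real (b - b')
      - f_aux b0 lam b * exp (\<i> * of_real (K * (b - b'))) / of_real (b - b')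
      - phi_aux 1 b0 lam K b b' * exp (- \<i> * of_real (K * (b + b'))) / of_real (b * b')"
  unfolding br_gen[OF bb] f_conv conv_K phi_aux_def by (simp add: algebra_simps add_divide_distrib diff_divide_distrib)

lemma conv_G1:
  "exp (- \<i> * of_real (lam * x) - \<i> * of_real (K * (b - b'))) = Ei (K*b') / Ei (K*b) / Ei (lam*x)"
  "exp (- \<i> * of_real (lam * x) + \<i> * of_real (K * (b - b'))) = Ei (K*b) / Ei (K*b') / Ei (lam*x)"
  "complex_of_real ((sin (b0 * x))^2 / x^2) = ((2 - Ei (b0*x)^2 - 1/Ei (b0*x)^2)/4) / of_real (x^2)"
proof -
  have "exp (- \<i> * of_real (lam * x) - \<i> * of_real (K * (b - b'))) = Ei (K*b' - K*b - lam*x)"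
    unfolding Ei_def by (simp add: algebra_simps)
  then show "exp (- \<i> * of_real (lam * x) - \<i> * of_real (K * (b - b'))) = Ei (K*b') / Ei (K*b) / Ei (lam*x)"
    by (simp add: Ei_diff)
  have "exp (- \<i> * of_real (lam * x) + \<i> * of_real (K * (b - b'))) = Ei (K*b - K*b' - lam*x)"
    unfolding Ei_def by (simp add: algebra_simps)
  then show "exp (- \<i> * of_real (lam * x) + \<i> * of_real (K * (b - b'))) = Ei (K*b) / Ei (K*b') / Ei (lam*x)"
    by (simp add: Ei_diff)
  show "complex_of_real ((sin (b0 * x))^2 / x^2) = ((2 - Ei (b0*x)^2 - 1/Ei (b0*x)^2)/4) / of_real (x^2)"
    by (simp only: of_real_divide sinsq_Ei)
qed

lemma tsin:
  fixes A B1 B2 L x y :: complex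
  assumes "A \<noteq> 0" "B1 \<noteq> 0" "B2 \<noteq> 0" "L \<noteq> 0" "x \<noteq> 0" "y \<noteq> 0"
  shows "\<i>*(A^2*1 + 1*(-2*1) + (1/A^2)*1)/L/x^2*(B1/B2)/y = - (4*\<i>*(B1/B2/L/y*(((2 - A^2 - 1/A^2)/4)/x^2)))"
  using assms by (simp add: field_simps)

lemma br1:
  assumes bb: "b \<noteq> 0" "b' \<noteq> 0" "b \<noteq> b'"
  shows "\<i>/(Ei (K*b)*Ei (K*b')) * (Sx b b' (2*b0+2*K-lam) * 1 + Sx b b' (2*K-lam) * (-2*1) + Sx b b' (-2*b0+2*K-lam) * 1)
    = 4 * \<i> * (exp (- \<i> * of_real (lam * b') - \<i> * of_real (K * (b - b'))) / of_real (b - b') * complex_of_real ((sin (b0 * b'))^2 / b'^2)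
      - exp (- \<i> * of_real (lam * b) + \<i> * of_real (K * (b - b'))) / of_real (b - b') * complex_of_real ((sin (b0 * b))^2 / b^2))"
proof -
  have nz: "complex_of_real b \<noteq> 0" "complex_of_real b' \<noteq> 0" "complex_of_real (b - b') \<noteq> 0" using bb by auto
  have lin: "(- (of_real (2*b0+2*K-lam) * 1 + of_real (2*K-lam) * (-2*1) + of_real (-2*b0+2*K-lam) * 1)
         + (1+(-2*1)+1) * (\<i> * complex_of_real ((b+b')/(b*b')))) * (1/(Ei (K*b)*Ei (K*b'))) / of_real (b*b') = 0"
    by (simp add: algebra_simps)
  have t1: "\<i>*(Ei (b0*b)^2 * 1 + 1 * (-2*1) + (1 / Ei (b0*b)^2) * 1)/Ei (lam*b)/of_real (b^2) * (Ei (K*b)/Ei (K*b')) / of_real (b-b')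
     = - (4*\<i>*(Ei (K*b)/Ei (K*b')/Ei (lam*b)/of_real (b-b')*(((2 - Ei (b0*b)^2 - 1/Ei (b0*b)^2)/4)/of_real (b^2))))"
    using tsin[OF Ei_nz Ei_nz Ei_nz Ei_nz nz(1) nz(3)] by simp
  have t2: "\<i>*(Ei (b0*b')^2 * 1 + 1 * (-2*1) + (1 / Ei (b0*b')^2) * 1)/Ei (lam*b')/of_real (b'^2) * (Ei (K*b')/Ei (K*b)) / of_real (b-b')
     = - (4*\<i>*(Ei (K*b')/Ei (K*b)/Ei (lam*b')/of_real (b-b')*(((2 - Ei (b0*b')^2 - 1/Ei (b0*b')^2)/4)/of_real (b'^2))))"
    using tsin[OF Ei_nz Ei_nz Ei_nz Ei_nz nz(2) nz(3)] by simp
  show ?thesis unfolding br_gen[OF bb] conv_G1 lin t1 t2 by (simp add: algebra_simps)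
qed

lemma cond_le:
  assumes "al > 0" "g0 > 0" "k0 > 0" "lam > 0" "dt > 0" "M > 0"
  shows "dt \<le> 4*lam*k0/(al*g0*M) \<longleftrightarrow> M \<le> 2 * Kc al g0 k0 lam dt"
proof -
  have p: "al*g0*M > 0" "al*g0*dt > 0" using assms by auto
  have "dt \<le> 4*lam*k0/(al*g0*M) \<longleftrightarrow> dt*(al*g0*M) \<le> 4*lam*k0" using p by (simp add: le_divide_eq)
  also have "\<dots> \<longleftrightarrow> M*(al*g0*dt) \<le> 4*lam*k0" by (simp add: mult_ac)
  also have "\<dots> \<longleftrightarrow> M \<le> 4*lam*k0/(al*g0*dt)" using p by (simp add: le_divide_eq)
  also have "4*lam*k0/(al*g0*dt) = 2 * Kc al g0 k0 lam dt" unfolding Kc_def by simp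
  finally show ?thesis .
qed

lemma cond_ge:
  assumes "al > 0" "g0 > 0" "k0 > 0" "lam > 0" "dt > 0" "M > 0"
  shows "4*lam*k0/(al*g0*M) \<le> dt \<longleftrightarrow> 2 * Kc al g0 k0 lam dt \<le> M"
proof -
  have p: "al*g0*M > 0" "al*g0*dt > 0" using assms by auto
  have "4*lam*k0/(al*g0*M) \<le> dt \<longleftrightarrow> 4*lam*k0 \<le> dt*(al*g0*M)" using p by (simp add: divide_le_eq)
  also have "\<dots> \<longleftrightarrow> 4*lam*k0 \<le> M*(al*g0*dt)" by (simp add: mult_ac)
  also have "\<dots> \<longleftrightarrow> 4*lam*k0/(al*g0*dt) \<le> M" using p by (simp add: divide_le_eq)
  also have "4*lam*k0/(al*g0*dt) = 2 * Kc al g0 k0 lam dt" unfolding Kc_def by simp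
  finally show ?thesis .
qed

lemma g1scal: "b0 \<noteq> 0 \<Longrightarrow> \<i> * complex_of_real (C^2/(2*b0)) * E = complex_of_real (C^2/(8*b0)) * (4 * \<i> * E)"
  by (simp add: field_simps)

lemma four_k0: "(lam::real) > 0 \<Longrightarrow> 4*k0/(al*g0) = 4*lam*k0/(al*g0*lam)"
  by (simp add: field_simps)

theorem mainTheorem4:
  fixes al g0 k0 b0 lam dt b b' :: real
  assumes "al > 0" and "g0 > 0" and "k0 > 0" and "b0 > 0" and "lam > 2 * b0"
    and "dt > 0"
    and "b \<noteq> 0" and "b' \<noteq> 0" and "b \<noteq> b'"
  shows "(dt \<le> 4 * lam * k0 / (al * g0 * (lam + 2 * b0)) \<longrightarrow>
            Spm al g0 k0 b0 lam dt b b' = G1 al g0 k0 b0 lam dt b b')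
       \<and> (4 * lam * k0 / (al * g0 * (lam + 2 * b0)) \<le> dt \<and> dt \<le> 4 * k0 / (al * g0) \<longrightarrow>
            Spm al g0 k0 b0 lam dt b b' = G2 al g0 k0 b0 lam dt b b')
       \<and> (4 * k0 / (al * g0) \<le> dt \<and> dt \<le> 4 * lam * k0 / (al * g0 * (lam - 2 * b0)) \<longrightarrow>
            Spm al g0 k0 b0 lam dt b b' = G3 al g0 k0 b0 lam dt b b')
       \<and> (4 * lam * k0 / (al * g0 * (lam - 2 * b0)) \<le> dt \<longrightarrow>
            Spm al g0 k0 b0 lam dt b b' = 0)"
proof -
  note a = assms
  define K where "K = Kc al g0 k0 lam dt"
  define C where "C = Cc al g0 k0 lam dt"
  have lam0: "lam > 0" using a by linarith
  have Kpos: "K > 0" unfolding K_def Kc_def using a lam0 by (intro divide_pos_pos) auto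
  have bb: "b \<noteq> 0" "b' \<noteq> 0" "b \<noteq> b'" using a by auto
  have b00: "b0 \<noteq> 0" using a by auto
  have Mp: "lam + 2*b0 > 0" "lam - 2*b0 > 0" using a by auto
  have sp: "Spm al g0 k0 b0 lam dt b b' = of_real (C^2/(b0*pi)) *
      ((-1/4) * cpp K b b' * Lg b b' (2*b0+2*K-lam) + (1/2) * cpp K b b' * Lg b b' (2*K-lam)
       + (-1/4) * cpp K b b' * Lg b b' (-2*b0+2*K-lam))"
    unfolding Spm_def LINT_value[OF a(4) a(5) Kpos[unfolded K_def] bb] K_def C_def ..
  have c1: "dt \<le> 4 * lam * k0 / (al * g0 * (lam + 2 * b0)) \<longleftrightarrow> lam + 2*b0 \<le> 2*K"
    unfolding K_def by (rule cond_le) (use a Mp in auto)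
  have c2: "4 * lam * k0 / (al * g0 * (lam + 2 * b0)) \<le> dt \<longleftrightarrow> 2*K \<le> lam + 2*b0"
    unfolding K_def by (rule cond_ge) (use a Mp in auto)
  have c3: "dt \<le> 4 * k0 / (al * g0) \<longleftrightarrow> lam \<le> 2*K"
    unfolding four_k0[OF lam0] K_def by (rule cond_le) (use a lam0 in auto)
  have c4: "4 * k0 / (al * g0) \<le> dt \<longleftrightarrow> 2*K \<le> lam"
    unfolding four_k0[OF lam0] K_def by (rule cond_ge) (use a lam0 in auto)
  have c5: "dt \<le> 4 * lam * k0 / (al * g0 * (lam - 2 * b0)) \<longleftrightarrow> lam - 2*b0 \<le> 2*K"
    unfolding K_def by (rule cond_le) (use a Mp in auto)
  have c6: "4 * lam * k0 / (al * g0 * (lam - 2 * b0)) \<le> dt \<longleftrightarrow> 2*K \<le> lam - 2*b0"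
    unfolding K_def by (rule cond_ge) (use a Mp in auto)
  have G1e: "G1 al g0 k0 b0 lam dt b b' = of_real (C^2/(8*b0)) * (4 * \<i> * (exp (- \<i> * of_real (lam * b') - \<i> * of_real (K * (b - b'))) / of_real (b - b') * complex_of_real ((sin (b0 * b'))^2 / b'^2)
      - exp (- \<i> * of_real (lam * b) + \<i> * of_real (K * (b - b'))) / of_real (b - b') * complex_of_real ((sin (b0 * b))^2 / b^2)))"
    unfolding G1_def Let_def K_def[symmetric] C_def[symmetric] by (rule g1scal[OF b00])
  show ?thesis
  proof (intro conjI impI)
    assume h: "dt \<le> 4 * lam * k0 / (al * g0 * (lam + 2 * b0))"
    then have ineq: "lam + 2*b0 \<le> 2*K" using c1 by simp
    have w: "Lg b b' (2*b0+2*K-lam) = 2*pi*\<i> * Sx b b' (2*b0+2*K-lam) * 1"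
      "Lg b b' (2*K-lam) = 2*pi*\<i> * Sx b b' (2*K-lam) * 1"
      "Lg b b' (-2*b0+2*K-lam) = 2*pi*\<i> * Sx b b' (-2*b0+2*K-lam) * 1"
      by (rule Lg_pos, use a ineq in linarith)+
    show "Spm al g0 k0 b0 lam dt b b' = G1 al g0 k0 b0 lam dt b b'"
      unfolding sp w common[OF b00] G1e
      using br1[OF bb, of K b0 lam] by simp
  next
    assume h: "4 * lam * k0 / (al * g0 * (lam + 2 * b0)) \<le> dt \<and> dt \<le> 4 * k0 / (al * g0)"
    then have ineq: "2*K \<le> lam + 2*b0" "lam \<le> 2*K" using c2 c3 by auto
    have w1: "Lg b b' (2*b0+2*K-lam) = 2*pi*\<i> * Sx b b' (2*b0+2*K-lam) * 1" by (rule Lg_pos, use a ineq in linarith)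
    have w2: "Lg b b' (2*K-lam) = 2*pi*\<i> * Sx b b' (2*K-lam) * 1" by (rule Lg_pos, use a ineq in linarith)
    have w3: "Lg b b' (-2*b0+2*K-lam) = 2*pi*\<i> * Sx b b' (-2*b0+2*K-lam) * 0" by (rule Lg_neg[OF bb], use a ineq in linarith)
    note w = w1 w2 w3
    show "Spm al g0 k0 b0 lam dt b b' = G2 al g0 k0 b0 lam dt b b'"
      unfolding sp w common[OF b00] G2_def Let_def K_def[symmetric] C_def[symmetric]
      using br2[OF bb, of K b0 lam] by simp
  next
    assume h: "4 * k0 / (al * g0) \<le> dt \<and> dt \<le> 4 * lam * k0 / (al * g0 * (lam - 2 * b0))"
    then have ineq: "2*K \<le> lam" "lam - 2*b0 \<le> 2*K" using c4 c5 by auto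
    have w1: "Lg b b' (2*b0+2*K-lam) = 2*pi*\<i> * Sx b b' (2*b0+2*K-lam) * 1" by (rule Lg_pos, use a ineq in linarith)
    have w2: "Lg b b' (2*K-lam) = 2*pi*\<i> * Sx b b' (2*K-lam) * 0" by (rule Lg_neg[OF bb], use a ineq in linarith)
    have w3: "Lg b b' (-2*b0+2*K-lam) = 2*pi*\<i> * Sx b b' (-2*b0+2*K-lam) * 0" by (rule Lg_neg[OF bb], use a ineq in linarith)
    note w = w1 w2 w3
    show "Spm al g0 k0 b0 lam dt b b' = G3 al g0 k0 b0 lam dt b b'"
      unfolding sp w common[OF b00] G3_def Let_def K_def[symmetric] C_def[symmetric]
      using br3[OF bb, of K b0 lam] by simp
  next
    assume h: "4 * lam * k0 / (al * g0 * (lam - 2 * b0)) \<le> dt"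
    then have ineq: "2*K \<le> lam - 2*b0" using c6 by auto
    have w1: "Lg b b' (2*b0+2*K-lam) = 2*pi*\<i> * Sx b b' (2*b0+2*K-lam) * 0" by (rule Lg_neg[OF bb], use a ineq in linarith)
    have w2: "Lg b b' (2*K-lam) = 2*pi*\<i> * Sx b b' (2*K-lam) * 0" by (rule Lg_neg[OF bb], use a ineq in linarith)
    have w3: "Lg b b' (-2*b0+2*K-lam) = 2*pi*\<i> * Sx b b' (-2*b0+2*K-lam) * 0" by (rule Lg_neg[OF bb], use a ineq in linarith)
    note w = w1 w2 w3
    show "Spm al g0 k0 b0 lam dt b b' = 0"
      unfolding sp w by simp
  qed
qed

end
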